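(* Under the standing model below, with $0\le\phi<1$, the bias of the IID-resampled backtested variance of the rolling-window mean-variance portfolio rule equals $$\mathrm{bias}(\hat\sigma_p^{*2})=\sigma_p^{*2}-\sigma_p^2=-\frac{1}{\gamma^2}\left[(\theta^2+1)\frac{\sigma_\mu^2}{\sigma_R^2}B_{n,\phi}+\frac{\sigma_\mu^2}{\sigma_R^2}A_{n,\phi}\left(\frac{\sigma_\mu^2}{\sigma_R^2}A_{n,\phi}+2\theta^2\right)\right],$$ and, with $C=3\theta^2+\psi+1$, it satisfies $$-\frac{C}{\gamma^2}\,\psi\;\le\;\mathrm{bias}(\hat\sigma_p^{*2})\;\le\;0.$$
   Context: Standing model (single risky asset, risk-free rate zero). Let $0\le\phi<1$, $\mu_0\in\mathbb R$, $\sigma_\eta^2\ge 0$, $\sigma_\epsilon^2>0$. Let $(\eta_t)_{t\in\mathbb Z}$ be i.i.d. $N(0,\sigma_\eta^2)$ and $(\epsilon_t)_{t\in\mathbb Z}$ be i.i.d. $N(0,\sigma_\epsilon^2)$, the two sequences mutually independent. Let $(\mu_t)$ be the stationary solution of $\mu_t=\mu_0+\phi\mu_{t-1}+\eta_t$, and set the return $R_t=\mu_t+\epsilon_t$. Write $\sigma_\mu^2=\mathrm{Var}(\mu_t)=\sigma_\eta^2/(1-\phi^2)$, $\sigma_R^2=\mathrm{Var}(R_t)=\sigma_\mu^2+\sigma_\epsilon^2$, $\mu=\mathbb E[R_t]=\mu_0/(1-\phi)$, $\theta=\mu/\sigma_R$ (the asset's Sharpe ratio) and $\psi=\mathrm{Corr}(R_t,R_{t+1})$.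 The variance $\sigma_R^2$ is treated as known. Fix an integer window size $n\ge1$ and risk aversion $\gamma>0$. The portfolio rule uses the rolling mean $\hat\mu_t=\frac1n\sum_{i=t-n+1}^{t}R_i$ and weight $w_t=\hat\mu_t/(\gamma\sigma_R^2)$; its out-of-sample return is $R_{p,t+1}=w_tR_{t+1}$, with $\mu_p=\mathbb E[R_{p,t+1}]$ and $\sigma_p^2=\mathrm{Var}(R_{p,t+1})$. The IID-resampled counterpart: let $(R^*_t)$ be i.i.d. with the same marginal distribution $N(\mu,\sigma_R^2)$ as $R_t$, let $\hat\mu^*_t=\frac1n\sum_{i=t-n+1}^tR^*_i$, $w^*_t=\hat\mu^*_t/(\gamma\sigma_R^2)$, $R^*_{p,t+1}=w^*_tR^*_{t+1}$, $\mu_p^*=\mathbb E[R^*_{p,t+1}]$, $\sigma_p^{*2}=\mathrm{Var}(R^*_{p,t+1})$. Define $\mathrm{bias}(\hat\mu_p^* )=\mu_p^*-\mu_p$ and $\mathrm{bias}(\hat\sigma_p^{*2})=\sigma_p^{*2}-\sigma_p^2$. Define $A_{n,\phi}=\frac1n\sum_{k=1}^n\phi^k$ and $B_{n,\phi}=\frac1{n^2}\sum_{i=1}^n\sum_{j=1,j\ne i}^n\phi^{|i-j|}$. *)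

theory Defs
  imports "HOL-Probability.Probability"
begin

definition gaussian_rv :: "'a measure \<Rightarrow> ('a \<Rightarrow> real) \<Rightarrow> real \<Rightarrow> real \<Rightarrow> bool" where
  "gaussian_rv M X m v \<longleftrightarrow> X \<in> borel_measurable M \<and> v \<ge> 0 \<and>
     (if v > 0 then distributed M lborel X (normal_density m (sqrt v))
      else (AE x in M. X x = m))"

definition A_coef :: "nat \<Rightarrow> real \<Rightarrow> real" where
  "A_coef n \<phi> = (1 / real n) * (\<Sum>k=1..n. \<phi> ^ k)"

definition B_coef :: "nat \<Rightarrow> real \<Rightarrow> real" where
  "B_coef n \<phi> = (1 / (real n)^2) * (\<Sum>i=1..n. \<Sum>j\<in>{1..n} - {i}. \<phi> ^ (nat \<bar>int i - int j\<bar>))"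

definition roll_mean :: "nat \<Rightarrow> (int \<Rightarrow> 'a \<Rightarrow> real) \<Rightarrow> int \<Rightarrow> 'a \<Rightarrow> real" where
  "roll_mean n R t x = (1 / real n) * (\<Sum>i\<in>{t - int n + 1..t}. R i x)"

definition port_ret :: "nat \<Rightarrow> real \<Rightarrow> real \<Rightarrow> (int \<Rightarrow> 'a \<Rightarrow> real) \<Rightarrow> int \<Rightarrow> 'a \<Rightarrow> real" where
  "port_ret n \<gamma> sR2 R t x = (roll_mean n R t x / (\<gamma> * sR2)) * R (t + 1) x"

definition corr :: "'a measure \<Rightarrow> ('a \<Rightarrow> real) \<Rightarrow> ('a \<Rightarrow> real) \<Rightarrow> real" where
  "corr M X Y = (prob_space.expectation M (\<lambda>x. X x * Y x)
                   - prob_space.expectation M X * prob_space.expectation M Y)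
                / sqrt (prob_space.variance M X * prob_space.variance M Y)"

end

theory Submission
  imports Defs
begin

context prob_space begin

definition gl :: "('a \<Rightarrow> real) \<Rightarrow> bool" where
  "gl L \<longleftrightarrow> L \<in> borel_measurable M \<and> integrable M (\<lambda>x. L x ^ 4) \<and> expectation L = 0
     \<and> expectation (\<lambda>x. L x ^ 3) = 0 \<and> expectation (\<lambda>x. L x ^ 4) = 3 * (expectation (\<lambda>x. L x ^ 2))^2"

lemma integrable_pow_le4:
  fixes L :: "'a \<Rightarrow> real"
  assumes "L \<in> borel_measurable M" "integrable M (\<lambda>x. L x ^ 4)" "k \<le> 4"
  shows "integrable M (\<lambda>x. L x ^ k)"
proof (rule Bochner_Integration.integrable_bound[where f="\<lambda>x. 1 + L x ^ 4"])
  show "integrable M (\<lambda>x. 1 + L x ^ 4)" using assms by auto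
  show "(\<lambda>x. L x ^ k) \<in> borel_measurable M" using assms by auto
  show "AE x in M. norm (L x ^ k) \<le> norm (1 + L x ^ 4)"
  proof (rule AE_I2)
    fix x
    have "\<bar>L x\<bar> ^ k \<le> 1 + \<bar>L x\<bar> ^ 4"
    proof (cases "\<bar>L x\<bar> \<le> 1")
      case True
      then have "\<bar>L x\<bar> ^ k \<le> 1" by (simp add: power_le_one)
      then show ?thesis by (smt (verit) zero_le_power abs_ge_zero)
    next
      case False
      then have "\<bar>L x\<bar> ^ k \<le> \<bar>L x\<bar> ^ 4" using assms(3) by (intro power_increasing) auto
      then show ?thesis by simp
    qed
    moreover have "\<bar>L x\<bar>^4 = L x ^ 4" by (simp add: power_even_abs_numeral)
    ultimately show "norm (L x ^ k) \<le> norm (1 + L x ^ 4)" by (simp add: power_abs)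
  qed
qed


lemma indep_pow_mult:
  fixes L X :: "'a \<Rightarrow> real"
  assumes ind: "indep_var borel L borel X" and iL: "integrable M (\<lambda>x. L x ^ a)"
    and iX: "integrable M (\<lambda>x. X x ^ b)"
  shows "integrable M (\<lambda>x. L x ^ a * X x ^ b)"
    and "expectation (\<lambda>x. L x ^ a * X x ^ b) = expectation (\<lambda>x. L x ^ a) * expectation (\<lambda>x. X x ^ b)"
proof -
  have "indep_var borel ((\<lambda>y. y ^ a) \<circ> L) borel ((\<lambda>y. y ^ b) \<circ> X)"
    by (rule indep_var_compose[OF ind]) auto
  then have i: "indep_var borel (\<lambda>x. L x ^ a) borel (\<lambda>x. X x ^ b)" by (simp add: comp_def)
  show "integrable M (\<lambda>x. L x ^ a * X x ^ b)" by (rule indep_var_integrable[OF i iL iX])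
  show "expectation (\<lambda>x. L x ^ a * X x ^ b) = expectation (\<lambda>x. L x ^ a) * expectation (\<lambda>x. X x ^ b)"
    by (rule indep_var_lebesgue_integral[OF i iL iX])
qed

lemma int_lin5:
  fixes f1 f2 f3 f4 f5 :: "'a \<Rightarrow> real"
  assumes "integrable M f1" "integrable M f2" "integrable M f3" "integrable M f4" "integrable M f5"
  shows "expectation (\<lambda>x. c1 * f1 x + c2 * f2 x + c3 * f3 x + c4 * f4 x + c5 * f5 x)
     = c1 * expectation f1 + c2 * expectation f2 + c3 * expectation f3 + c4 * expectation f4 + c5 * expectation f5"
    and "integrable M (\<lambda>x. c1 * f1 x + c2 * f2 x + c3 * f3 x + c4 * f4 x + c5 * f5 x)"
  using assms by simp_all

lemma gl_add:
  fixes L X :: "'a \<Rightarrow> real"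
  assumes ind: "indep_var borel L borel X" and gL: "gl L" and gX: "gl X"
  shows "gl (\<lambda>x. L x + X x)"
    and "expectation (\<lambda>x. (L x + X x)^2) = expectation (\<lambda>x. L x ^ 2) + expectation (\<lambda>x. X x ^ 2)"
proof -
  have mL: "L \<in> borel_measurable M" and mX: "X \<in> borel_measurable M"
    using gL gX unfolding gl_def by blast+
  have iL: "\<And>k. k \<le> 4 \<Longrightarrow> integrable M (\<lambda>x. L x ^ k)"
    using gL unfolding gl_def using integrable_pow_le4 by blast
  have iX: "\<And>k. k \<le> 4 \<Longrightarrow> integrable M (\<lambda>x. X x ^ k)"
    using gX unfolding gl_def using integrable_pow_le4 by blast
  have iP: "\<And>a b. a \<le> 4 \<Longrightarrow> b \<le> 4 \<Longrightarrow> integrable M (\<lambda>x. L x ^ a * X x ^ b)"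
    by (rule indep_pow_mult(1)[OF ind iL iX])
  have eP: "\<And>a b. a \<le> 4 \<Longrightarrow> b \<le> 4 \<Longrightarrow> expectation (\<lambda>x. L x ^ a * X x ^ b) = expectation (\<lambda>x. L x ^ a) * expectation (\<lambda>x. X x ^ b)"
    by (rule indep_pow_mult(2)[OF ind iL iX])
  have E0: "expectation (\<lambda>x. L x ^ 0) = 1" "expectation (\<lambda>x. X x ^ 0) = 1" by (simp_all add: prob_space)
  have E1: "expectation (\<lambda>x. L x ^ 1) = 0" "expectation (\<lambda>x. X x ^ 1) = 0" using gL gX by (simp_all add: gl_def)
  have E3: "expectation (\<lambda>x. L x ^ 3) = 0" "expectation (\<lambda>x. X x ^ 3) = 0" using gL gX by (simp_all add: gl_def)
  have E4: "expectation (\<lambda>x. L x ^ 4) = 3 * (expectation (\<lambda>x. L x ^ 2))^2"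
      "expectation (\<lambda>x. X x ^ 4) = 3 * (expectation (\<lambda>x. X x ^ 2))^2" using gL gX by (simp_all add: gl_def)
  have e00: "expectation (\<lambda>x. L x ^ 0 * X x ^ 0) = expectation (\<lambda>x. L x ^ 0) * expectation (\<lambda>x. X x ^ 0)" by (rule eP) simp_all
  have i00: "integrable M (\<lambda>x. L x ^ 0 * X x ^ 0)" by (rule iP) simp_all
  have e01: "expectation (\<lambda>x. L x ^ 0 * X x ^ 1) = expectation (\<lambda>x. L x ^ 0) * expectation (\<lambda>x. X x ^ 1)" by (rule eP) simp_all
  have i01: "integrable M (\<lambda>x. L x ^ 0 * X x ^ 1)" by (rule iP) simp_all
  have e02: "expectation (\<lambda>x. L x ^ 0 * X x ^ 2) = expectation (\<lambda>x. L x ^ 0) * expectation (\<lambda>x. X x ^ 2)" by (rule eP) simp_all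
  have i02: "integrable M (\<lambda>x. L x ^ 0 * X x ^ 2)" by (rule iP) simp_all
  have e03: "expectation (\<lambda>x. L x ^ 0 * X x ^ 3) = expectation (\<lambda>x. L x ^ 0) * expectation (\<lambda>x. X x ^ 3)" by (rule eP) simp_all
  have i03: "integrable M (\<lambda>x. L x ^ 0 * X x ^ 3)" by (rule iP) simp_all
  have e04: "expectation (\<lambda>x. L x ^ 0 * X x ^ 4) = expectation (\<lambda>x. L x ^ 0) * expectation (\<lambda>x. X x ^ 4)" by (rule eP) simp_all
  have i04: "integrable M (\<lambda>x. L x ^ 0 * X x ^ 4)" by (rule iP) simp_all
  have e10: "expectation (\<lambda>x. L x ^ 1 * X x ^ 0) = expectation (\<lambda>x. L x ^ 1) * expectation (\<lambda>x. X x ^ 0)" by (rule eP) simp_all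
  have i10: "integrable M (\<lambda>x. L x ^ 1 * X x ^ 0)" by (rule iP) simp_all
  have e11: "expectation (\<lambda>x. L x ^ 1 * X x ^ 1) = expectation (\<lambda>x. L x ^ 1) * expectation (\<lambda>x. X x ^ 1)" by (rule eP) simp_all
  have i11: "integrable M (\<lambda>x. L x ^ 1 * X x ^ 1)" by (rule iP) simp_all
  have e12: "expectation (\<lambda>x. L x ^ 1 * X x ^ 2) = expectation (\<lambda>x. L x ^ 1) * expectation (\<lambda>x. X x ^ 2)" by (rule eP) simp_all
  have i12: "integrable M (\<lambda>x. L x ^ 1 * X x ^ 2)" by (rule iP) simp_all
  have e13: "expectation (\<lambda>x. L x ^ 1 * X x ^ 3) = expectation (\<lambda>x. L x ^ 1) * expectation (\<lambda>x. X x ^ 3)" by (rule eP) simp_all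
  have i13: "integrable M (\<lambda>x. L x ^ 1 * X x ^ 3)" by (rule iP) simp_all
  have e20: "expectation (\<lambda>x. L x ^ 2 * X x ^ 0) = expectation (\<lambda>x. L x ^ 2) * expectation (\<lambda>x. X x ^ 0)" by (rule eP) simp_all
  have i20: "integrable M (\<lambda>x. L x ^ 2 * X x ^ 0)" by (rule iP) simp_all
  have e21: "expectation (\<lambda>x. L x ^ 2 * X x ^ 1) = expectation (\<lambda>x. L x ^ 2) * expectation (\<lambda>x. X x ^ 1)" by (rule eP) simp_all
  have i21: "integrable M (\<lambda>x. L x ^ 2 * X x ^ 1)" by (rule iP) simp_all
  have e22: "expectation (\<lambda>x. L x ^ 2 * X x ^ 2) = expectation (\<lambda>x. L x ^ 2) * expectation (\<lambda>x. X x ^ 2)" by (rule eP) simp_all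
  have i22: "integrable M (\<lambda>x. L x ^ 2 * X x ^ 2)" by (rule iP) simp_all
  have e30: "expectation (\<lambda>x. L x ^ 3 * X x ^ 0) = expectation (\<lambda>x. L x ^ 3) * expectation (\<lambda>x. X x ^ 0)" by (rule eP) simp_all
  have i30: "integrable M (\<lambda>x. L x ^ 3 * X x ^ 0)" by (rule iP) simp_all
  have e31: "expectation (\<lambda>x. L x ^ 3 * X x ^ 1) = expectation (\<lambda>x. L x ^ 3) * expectation (\<lambda>x. X x ^ 1)" by (rule eP) simp_all
  have i31: "integrable M (\<lambda>x. L x ^ 3 * X x ^ 1)" by (rule iP) simp_all
  have e40: "expectation (\<lambda>x. L x ^ 4 * X x ^ 0) = expectation (\<lambda>x. L x ^ 4) * expectation (\<lambda>x. X x ^ 0)" by (rule eP) simp_all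
  have i40: "integrable M (\<lambda>x. L x ^ 4 * X x ^ 0)" by (rule iP) simp_all
  note ee = e00 e01 e02 e03 e04 e10 e11 e12 e13 e20 e21 e22 e30 e31 e40
  have m0: "expectation L = 0" "expectation X = 0" "prob (space M) = 1" using gL gX by (simp_all add: gl_def prob_space)
  define l2 where "l2 = expectation (\<lambda>x. L x ^ 2)"
  define x2 where "x2 = expectation (\<lambda>x. X x ^ 2)"
  have p1: "\<And>x. (L x + X x) = 0 * (L x ^ 4 * X x ^ 0) + 0 * (L x ^ 3 * X x ^ 1) + 0 * (L x ^ 2 * X x ^ 2) + 1 * (L x ^ 1 * X x ^ 0) + 1 * (L x ^ 0 * X x ^ 1)"
    by simp
  have p2: "\<And>x. (L x + X x)^2 = 0 * (L x ^ 4 * X x ^ 0) + 0 * (L x ^ 3 * X x ^ 1) + 1 * (L x ^ 2 * X x ^ 0) + 2 * (L x ^ 1 * X x ^ 1) + 1 * (L x ^ 0 * X x ^ 2)"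
    by (simp add: power2_eq_square algebra_simps)
  have p3: "\<And>x. (L x + X x)^3 = 1 * (L x ^ 3 * X x ^ 0) + 3 * (L x ^ 2 * X x ^ 1) + 3 * (L x ^ 1 * X x ^ 2) + 1 * (L x ^ 0 * X x ^ 3) + 0 * (L x ^ 0 * X x ^ 0)"
    by (simp add: power2_eq_square power3_eq_cube algebra_simps)
  have p4: "\<And>x. (L x + X x)^4 = 1 * (L x ^ 4 * X x ^ 0) + 4 * (L x ^ 3 * X x ^ 1) + 6 * (L x ^ 2 * X x ^ 2) + 4 * (L x ^ 1 * X x ^ 3) + 1 * (L x ^ 0 * X x ^ 4)"
    by (simp add: eval_nat_numeral algebra_simps)
  have I4: "integrable M (\<lambda>x. (L x + X x)^4)"
    unfolding p4 by (rule int_lin5(2)[OF i40 i31 i22 i13 i04])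
  have S1: "expectation (\<lambda>x. L x + X x) = 0"
    unfolding p1 by (subst int_lin5(1)[OF i40 i31 i22 i10 i01], simp only: ee, simp add: E0 E1 m0)
  have S2: "expectation (\<lambda>x. (L x + X x)^2) = l2 + x2"
    unfolding p2 l2_def x2_def by (subst int_lin5(1)[OF i40 i31 i20 i11 i02], simp only: ee, simp add: E0 E1 m0)
  have S3: "expectation (\<lambda>x. (L x + X x)^3) = 0"
    unfolding p3 by (subst int_lin5(1)[OF i30 i21 i12 i03 i00], simp only: ee, simp add: E0 E1 m0 E3)
  have S4: "expectation (\<lambda>x. (L x + X x)^4) = 3 * (l2 + x2)^2"
  proof -
    have "expectation (\<lambda>x. (L x + X x)^4) = 3*l2^2 + 6 * (l2 * x2) + 3 * x2^2"
      unfolding p4 l2_def x2_def by (subst int_lin5(1)[OF i40 i31 i22 i13 i04], simp only: ee, simp add: E0 E1 m0 E3 E4)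
    then show ?thesis by (simp add: power2_eq_square algebra_simps)
  qed
  show "gl (\<lambda>x. L x + X x)" unfolding gl_def using mL mX I4 S1 S3 S4 S2 by auto
  show "expectation (\<lambda>x. (L x + X x)^2) = expectation (\<lambda>x. L x ^ 2) + expectation (\<lambda>x. X x ^ 2)"
    using S2 l2_def x2_def by simp
qed

lemma gl_scale:
  fixes L :: "'a \<Rightarrow> real"
  assumes "gl L" shows "gl (\<lambda>x. c * L x)"
  using assms unfolding gl_def by (auto simp: power_mult_distrib)

lemma gl_zero: "gl (\<lambda>x. 0)"
  unfolding gl_def by simp

end

context prob_space begin

lemma gauss_moments:
  fixes X :: "'a \<Rightarrow> real"
  assumes g: "gaussian_rv M X m v"
  shows "gl (\<lambda>x. X x - m)" "expectation (\<lambda>x. (X x - m)^2) = v"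
    "\<And>k. integrable M (\<lambda>x. (X x - m) ^ k)"
proof -
  have mX: "X \<in> borel_measurable M" and v0: "v \<ge> 0" using g by (auto simp: gaussian_rv_def)
  have res: "(\<forall>k. integrable M (\<lambda>x. (X x - m) ^ k)) \<and> expectation (\<lambda>x. X x - m) = 0 \<and>
     expectation (\<lambda>x. (X x - m)^2) = v \<and> expectation (\<lambda>x. (X x - m)^3) = 0 \<and> expectation (\<lambda>x. (X x - m)^4) = 3 * v^2"
  proof (cases "v > 0")
    case True
    define \<sigma> where "\<sigma> = sqrt v"
    have sp: "\<sigma> > 0" using True by (simp add: \<sigma>_def)
    have D: "distributed M lborel X (normal_density m \<sigma>)"
      using g True by (simp add: gaussian_rv_def \<sigma>_def)
    have I: "integrable M (\<lambda>x. (X x - m) ^ k)" for k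
      using distributed_integrable[OF D, of "\<lambda>x. (x - m)^k"] integrable_normal_moment[where \<sigma>=\<sigma> and \<mu>=m and k=k, OF sp] by simp
    have E: "expectation (\<lambda>x. (X x - m) ^ k) = integral\<^sup>L lborel (\<lambda>x. normal_density m \<sigma> x * (x - m)^k)" for k
      using distributed_integral[OF D, of "\<lambda>x. (x - m)^k"] by simp
    have e1: "integral\<^sup>L lborel (\<lambda>x. normal_density m \<sigma> x * (x - m)^1) = 0"
      using integral_normal_moment_odd[where \<sigma>=\<sigma> and \<mu>=m and k=0, OF sp] by simp
    have e3: "integral\<^sup>L lborel (\<lambda>x. normal_density m \<sigma> x * (x - m)^3) = 0"
      using integral_normal_moment_odd[where \<sigma>=\<sigma> and \<mu>=m and k=1, OF sp] by simp
    have e2: "integral\<^sup>L lborel (\<lambda>x. normal_density m \<sigma> x * (x - m)^2) = v"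
      using integral_normal_moment_even[where \<sigma>=\<sigma> and \<mu>=m and k=1, OF sp] sp True by (simp add: \<sigma>_def)
    have e4: "integral\<^sup>L lborel (\<lambda>x. normal_density m \<sigma> x * (x - m)^4) = 3 * v^2"
    proof -
      have "integral\<^sup>L lborel (\<lambda>x. normal_density m \<sigma> x * (x - m)^(2*2)) = fact (2 * 2) / ((2 / \<sigma>\<^sup>2)^2 * fact 2)"
        by (rule integral_normal_moment_even[where \<sigma>=\<sigma> and \<mu>=m and k=2, OF sp])
      moreover have "fact (2 * 2) / ((2 / \<sigma>\<^sup>2)^2 * fact 2) = 3 * v^2"
        using sp True by (simp add: \<sigma>_def fact_numeral power2_eq_square field_simps)
      ultimately show ?thesis by simp
    qed
    show ?thesis using I E[of 1] E[of 2] E[of 3] E[of 4] e1 e2 e3 e4 by simp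
  next
    case False
    then have v: "v = 0" using v0 by simp
    then have ae: "AE x in M. X x = m" using g by (simp add: gaussian_rv_def)
    have ae2: "AE x in M. (X x - m) ^ k = 0" if "k > 0" for k::nat
      using ae by (rule eventually_mono) (use that in simp)
    have I: "integrable M (\<lambda>x. (X x - m) ^ k)" for k
    proof (cases "k = 0")
      case True then show ?thesis by simp
    next
      case False
      then show ?thesis using ae2[of k] mX
        by (subst integrable_cong_AE[where g="\<lambda>x. 0"]) auto
    qed
    have E: "expectation (\<lambda>x. (X x - m) ^ k) = 0" if "k > 0" for k
      using ae2[OF that] mX by (subst integral_cong_AE[where g="\<lambda>x. 0"]) auto
    show ?thesis using I E[of 1] E[of 2] E[of 3] E[of 4] v by simp
  qed
  then show "gl (\<lambda>x. X x - m)" "expectation (\<lambda>x. (X x - m)^2) = v"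
    "\<And>k. integrable M (\<lambda>x. (X x - m) ^ k)"
    using mX by (auto simp: gl_def)
qed

end

context prob_space begin

lemma gl_lin:
  fixes \<xi> :: "'i \<Rightarrow> 'a \<Rightarrow> real"
  assumes fin: "finite I" and ind: "indep_vars (\<lambda>_. borel) \<xi> I" and g: "\<And>i. i \<in> I \<Longrightarrow> gl (\<xi> i)"
  shows "gl (\<lambda>x. \<Sum>i\<in>I. c i * \<xi> i x)"
proof -
  have ind': "indep_vars (\<lambda>_. borel) (\<lambda>i x. c i * \<xi> i x) I"
    by (rule indep_vars_compose2[OF ind]) auto
  have "finite F \<Longrightarrow> F \<subseteq> I \<Longrightarrow> gl (\<lambda>x. \<Sum>i\<in>F. c i * \<xi> i x)" for F
  proof (induction F rule: finite_induct)
    case empty then show ?case by (simp add: gl_zero)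
  next
    case (insert k F)
    note 3 = insert
    have ik: "indep_var borel (\<lambda>x. c k * \<xi> k x) borel (\<lambda>\<omega>. \<Sum>i\<in>F. c i * \<xi> i \<omega>)"
      using indep_vars_sum[of F k "\<lambda>i x. c i * \<xi> i x"] 3 indep_vars_subset[OF ind'] by auto
    have "gl (\<lambda>x. c k * \<xi> k x + (\<Sum>i\<in>F. c i * \<xi> i x))"
      by (rule gl_add(1)[OF ik gl_scale[OF g]]) (use 3 in auto)
    then show ?case using 3 by simp
  qed
  then show ?thesis using fin by simp
qed

lemma gl_int:
  fixes L :: "'a \<Rightarrow> real"
  assumes "gl L" "k \<le> 4" shows "integrable M (\<lambda>x. L x ^ k)"
  using assms integrable_pow_le4 unfolding gl_def by blast

lemma lin_cov:
  fixes \<xi> :: "'i \<Rightarrow> 'a \<Rightarrow> real"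
  assumes fin: "finite I" and ind: "indep_vars (\<lambda>_. borel) \<xi> I" and g: "\<And>i. i \<in> I \<Longrightarrow> gl (\<xi> i)"
  shows "expectation (\<lambda>x. (\<Sum>i\<in>I. c i * \<xi> i x) * (\<Sum>i\<in>I. d i * \<xi> i x))
           = (\<Sum>i\<in>I. c i * d i * expectation (\<lambda>x. \<xi> i x ^ 2))"
proof -
  have pij: "integrable M (\<lambda>x. \<xi> i x * \<xi> j x) \<and> expectation (\<lambda>x. \<xi> i x * \<xi> j x) = (if i = j then expectation (\<lambda>x. \<xi> i x ^ 2) else 0)"
    if "i \<in> I" "j \<in> I" for i j
  proof (cases "i = j")
    case True
    then show ?thesis using gl_int[OF g[OF that(1)], of 2] by (simp add: power2_eq_square)
  next
    case False
    have ij: "indep_var borel (\<xi> i) borel (\<lambda>\<omega>. \<Sum>l\<in>{j}. \<xi> l \<omega>)"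
      using indep_vars_sum[of "{j}" i \<xi>] indep_vars_subset[OF ind] that False by auto
    then have ij: "indep_var borel (\<xi> i) borel (\<xi> j)" by simp
    have i1: "integrable M (\<xi> i)" "integrable M (\<xi> j)"
      using gl_int[OF g[OF that(1)], of 1] gl_int[OF g[OF that(2)], of 1] by simp_all
    show ?thesis using indep_var_integrable[OF ij i1] indep_var_lebesgue_integral[OF ij i1] g that False
      by (simp add: gl_def)
  qed
  have "(\<lambda>x. (\<Sum>i\<in>I. c i * \<xi> i x) * (\<Sum>i\<in>I. d i * \<xi> i x)) = (\<lambda>x. \<Sum>i\<in>I. \<Sum>j\<in>I. c i * d j * (\<xi> i x * \<xi> j x))"
    by (simp add: sum_product algebra_simps)
  then have "expectation (\<lambda>x. (\<Sum>i\<in>I. c i * \<xi> i x) * (\<Sum>i\<in>I. d i * \<xi> i x))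
     = (\<Sum>i\<in>I. \<Sum>j\<in>I. c i * d j * expectation (\<lambda>x. \<xi> i x * \<xi> j x))"
    using pij by (simp add: Bochner_Integration.integral_sum)
  also have "\<dots> = (\<Sum>i\<in>I. \<Sum>j\<in>I. if j = i then c i * d i * expectation (\<lambda>x. \<xi> i x ^ 2) else 0)"
    using pij by (intro sum.cong refl) auto
  also have "\<dots> = (\<Sum>i\<in>I. c i * d i * expectation (\<lambda>x. \<xi> i x ^ 2))"
    using fin by (simp add: sum.delta)
  finally show ?thesis .
qed

end

lemma mono_bound:
  fixes a b :: real
  assumes "i + j \<le> 4"
  shows "\<bar>a ^ i * b ^ j\<bar> \<le> 1 + a ^ 4 + b ^ 4"
proof -
  define m where "m = max \<bar>a\<bar> \<bar>b\<bar>"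
  have m0: "m \<ge> 0" by (simp add: m_def)
  have "\<bar>a ^ i * b ^ j\<bar> = \<bar>a\<bar> ^ i * \<bar>b\<bar> ^ j" by (simp add: abs_mult power_abs)
  also have "\<dots> \<le> m ^ i * m ^ j"
    by (intro mult_mono power_mono) (auto simp: m_def)
  also have "\<dots> = m ^ (i + j)" by (simp add: power_add)
  also have "\<dots> \<le> 1 + m ^ 4"
  proof (cases "m \<le> 1")
    case True
    then have "m ^ (i + j) \<le> 1" using m0 by (simp add: power_le_one)
    then show ?thesis using m0 by (smt (verit) zero_le_power)
  next
    case False
    then have "m ^ (i + j) \<le> m ^ 4" using assms by (intro power_increasing) auto
    then show ?thesis by simp
  qed
  also have "m ^ 4 \<le> a ^ 4 + b ^ 4"
  proof -
    have "m ^ 4 = a ^ 4 \<or> m ^ 4 = b ^ 4"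
      unfolding m_def by (auto simp: max_def power_even_abs_numeral)
    moreover have "a ^ 4 \<ge> 0" "b ^ 4 \<ge> 0" by (simp_all add: zero_le_even_power)
    ultimately show ?thesis by linarith
  qed
  finally show ?thesis by simp
qed

context prob_space begin

lemma mono_int:
  fixes A B :: "'a \<Rightarrow> real"
  assumes gA: "gl A" and gB: "gl B" and ij: "i + j \<le> 4"
  shows "integrable M (\<lambda>x. A x ^ i * B x ^ j)"
proof (rule Bochner_Integration.integrable_bound[where f="\<lambda>x. 1 + A x ^ 4 + B x ^ 4"])
  show "integrable M (\<lambda>x. 1 + A x ^ 4 + B x ^ 4)"
    using gA gB by (auto simp: gl_def)
  show "(\<lambda>x. A x ^ i * B x ^ j) \<in> borel_measurable M" using gA gB by (auto simp: gl_def)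
  show "AE x in M. norm (A x ^ i * B x ^ j) \<le> norm (1 + A x ^ 4 + B x ^ 4)"
  proof (rule AE_I2)
    fix x
    have "0 \<le> 1 + A x ^ 4 + B x ^ 4"
      by (simp add: add_nonneg_nonneg zero_le_even_power)
    then show "norm (A x ^ i * B x ^ j) \<le> norm (1 + A x ^ 4 + B x ^ 4)"
      using mono_bound[OF ij, of "A x" "B x"] by simp
  qed
qed

lemma gp_facts:
  fixes A B :: "'a \<Rightarrow> real"
  assumes G: "\<And>\<alpha> \<beta>. gl (\<lambda>x. \<alpha> * A x + \<beta> * B x)"
  shows "gl A" "gl B" "expectation (\<lambda>x. A x ^ 2 * B x ^ 1) = 0" "expectation (\<lambda>x. A x ^ 1 * B x ^ 2) = 0"
    "expectation (\<lambda>x. A x ^ 2 * B x ^ 2) = expectation (\<lambda>x. A x ^ 2) * expectation (\<lambda>x. B x ^ 2)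
        + 2 * (expectation (\<lambda>x. A x * B x))^2"
proof -
  show gA: "gl A" using G[of 1 0] by simp
  show gB: "gl B" using G[of 0 1] by simp
  have gP: "gl (\<lambda>x. A x + B x)" using G[of 1 1] by simp
  have gM: "gl (\<lambda>x. A x - B x)" using G[of 1 "-1"] by simp
  define m where "m i j = expectation (\<lambda>x. A x ^ i * B x ^ j)" for i j
  have I: "\<And>i j. i + j \<le> 4 \<Longrightarrow> integrable M (\<lambda>x. A x ^ i * B x ^ j)"
    by (rule mono_int[OF gA gB])
  have lin: "\<And>c1 c2 c3 c4 c5 i1 j1 i2 j2 i3 j3 i4 j4 i5 j5.
     i1 + j1 \<le> 4 \<Longrightarrow> i2 + j2 \<le> 4 \<Longrightarrow> i3 + j3 \<le> 4 \<Longrightarrow> i4 + j4 \<le> 4 \<Longrightarrow> i5 + j5 \<le> 4 \<Longrightarrow>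
     expectation (\<lambda>x. c1 * (A x ^ i1 * B x ^ j1) + c2 * (A x ^ i2 * B x ^ j2) + c3 * (A x ^ i3 * B x ^ j3)
        + c4 * (A x ^ i4 * B x ^ j4) + c5 * (A x ^ i5 * B x ^ j5))
     = c1 * m i1 j1 + c2 * m i2 j2 + c3 * m i3 j3 + c4 * m i4 j4 + c5 * m i5 j5"
    unfolding m_def by (rule int_lin5(1)) (rule I; assumption)+
  have a3: "m 3 0 = 0" "m 0 3 = 0" using gA gB by (simp_all add: m_def gl_def)
  have a4: "m 4 0 = 3 * (m 2 0)^2" "m 0 4 = 3 * (m 0 2)^2" using gA gB by (simp_all add: m_def gl_def)
  have P3: "m 3 0 + 3 * m 2 1 + 3 * m 1 2 + m 0 3 = 0"
  proof -
    have "(\<lambda>x. (A x + B x) ^ 3) = (\<lambda>x. 1 * (A x ^ 3 * B x ^ 0) + 3 * (A x ^ 2 * B x ^ 1) + 3 * (A x ^ 1 * B x ^ 2) + 1 * (A x ^ 0 * B x ^ 3) + 0 * (A x ^ 0 * B x ^ 0))"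
      by (simp add: fun_eq_iff eval_nat_numeral algebra_simps)
    then show ?thesis using gP lin[of 3 0 2 1 1 2 0 3 0 0 1 3 3 1 0] by (simp add: gl_def)
  qed
  have M3: "m 3 0 - 3 * m 2 1 + 3 * m 1 2 - m 0 3 = 0"
  proof -
    have "(\<lambda>x. (A x - B x) ^ 3) = (\<lambda>x. 1 * (A x ^ 3 * B x ^ 0) + (-3) * (A x ^ 2 * B x ^ 1) + 3 * (A x ^ 1 * B x ^ 2) + (-1) * (A x ^ 0 * B x ^ 3) + 0 * (A x ^ 0 * B x ^ 0))"
      by (simp add: fun_eq_iff eval_nat_numeral algebra_simps)
    then show ?thesis using gM lin[of 3 0 2 1 1 2 0 3 0 0 1 "-3" 3 "-1" 0] by (simp add: gl_def)
  qed
  show "expectation (\<lambda>x. A x ^ 2 * B x ^ 1) = 0" "expectation (\<lambda>x. A x ^ 1 * B x ^ 2) = 0"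
    using P3 M3 a3 unfolding m_def by linarith+
  have S2: "expectation (\<lambda>x. (A x + B x) ^ 2) = m 2 0 + 2 * m 1 1 + m 0 2"
  proof -
    have "(\<lambda>x. (A x + B x) ^ 2) = (\<lambda>x. 1 * (A x ^ 2 * B x ^ 0) + 2 * (A x ^ 1 * B x ^ 1) + 1 * (A x ^ 0 * B x ^ 2) + 0 * (A x ^ 0 * B x ^ 0) + 0 * (A x ^ 0 * B x ^ 0))"
      by (simp add: fun_eq_iff eval_nat_numeral algebra_simps)
    then show ?thesis using lin[of 2 0 1 1 0 2 0 0 0 0 1 2 1 0 0] by simp
  qed
  have D2: "expectation (\<lambda>x. (A x - B x) ^ 2) = m 2 0 - 2 * m 1 1 + m 0 2"
  proof -
    have "(\<lambda>x. (A x - B x) ^ 2) = (\<lambda>x. 1 * (A x ^ 2 * B x ^ 0) + (-2) * (A x ^ 1 * B x ^ 1) + 1 * (A x ^ 0 * B x ^ 2) + 0 * (A x ^ 0 * B x ^ 0) + 0 * (A x ^ 0 * B x ^ 0))"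
      by (simp add: fun_eq_iff eval_nat_numeral algebra_simps)
    then show ?thesis using lin[of 2 0 1 1 0 2 0 0 0 0 1 "-2" 1 0 0] by simp
  qed
  have P4: "m 4 0 + 4 * m 3 1 + 6 * m 2 2 + 4 * m 1 3 + m 0 4 = 3 * (m 2 0 + 2 * m 1 1 + m 0 2)^2"
  proof -
    have "(\<lambda>x. (A x + B x) ^ 4) = (\<lambda>x. 1 * (A x ^ 4 * B x ^ 0) + 4 * (A x ^ 3 * B x ^ 1) + 6 * (A x ^ 2 * B x ^ 2) + 4 * (A x ^ 1 * B x ^ 3) + 1 * (A x ^ 0 * B x ^ 4))"
      by (simp add: fun_eq_iff eval_nat_numeral algebra_simps)
    then show ?thesis using gP lin[of 4 0 3 1 2 2 1 3 0 4 1 4 6 4 1] S2 by (simp add: gl_def)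
  qed
  have M4: "m 4 0 - 4 * m 3 1 + 6 * m 2 2 - 4 * m 1 3 + m 0 4 = 3 * (m 2 0 - 2 * m 1 1 + m 0 2)^2"
  proof -
    have "(\<lambda>x. (A x - B x) ^ 4) = (\<lambda>x. 1 * (A x ^ 4 * B x ^ 0) + (-4) * (A x ^ 3 * B x ^ 1) + 6 * (A x ^ 2 * B x ^ 2) + (-4) * (A x ^ 1 * B x ^ 3) + 1 * (A x ^ 0 * B x ^ 4))"
      by (simp add: fun_eq_iff eval_nat_numeral algebra_simps)
    then show ?thesis using gM lin[of 4 0 3 1 2 2 1 3 0 4 1 "-4" 6 "-4" 1] D2 by (simp add: gl_def)
  qed
  have "m 2 2 = m 2 0 * m 0 2 + 2 * (m 1 1)^2"
    using P4 M4 a4 by (simp add: power2_eq_square algebra_simps)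
  then show "expectation (\<lambda>x. A x ^ 2 * B x ^ 2) = expectation (\<lambda>x. A x ^ 2) * expectation (\<lambda>x. B x ^ 2)
        + 2 * (expectation (\<lambda>x. A x * B x))^2" by (simp add: m_def)
qed

lemma int_lin9:
  fixes f1 f2 f3 f4 f5 f6 f7 f8 f9 :: "'a \<Rightarrow> real"
  assumes "integrable M f1" "integrable M f2" "integrable M f3" "integrable M f4" "integrable M f5"
    "integrable M f6" "integrable M f7" "integrable M f8" "integrable M f9"
  shows "expectation (\<lambda>x. c1 * f1 x + c2 * f2 x + c3 * f3 x + c4 * f4 x + c5 * f5 x + c6 * f6 x + c7 * f7 x + c8 * f8 x + c9 * f9 x)
     = c1 * expectation f1 + c2 * expectation f2 + c3 * expectation f3 + c4 * expectation f4 + c5 * expectation f5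
       + c6 * expectation f6 + c7 * expectation f7 + c8 * expectation f8 + c9 * expectation f9"
    and "integrable M (\<lambda>x. c1 * f1 x + c2 * f2 x + c3 * f3 x + c4 * f4 x + c5 * f5 x + c6 * f6 x + c7 * f7 x + c8 * f8 x + c9 * f9 x)"
  using assms by simp_all

lemma gp_var:
  fixes A B :: "'a \<Rightarrow> real"
  assumes G: "\<And>\<alpha> \<beta>. gl (\<lambda>x. \<alpha> * A x + \<beta> * B x)"
  shows "variance (\<lambda>x. (a + A x) * (b + B x)) = a^2 * expectation (\<lambda>x. B x ^ 2) + b^2 * expectation (\<lambda>x. A x ^ 2)
      + 2 * a * b * expectation (\<lambda>x. A x * B x) + expectation (\<lambda>x. A x ^ 2) * expectation (\<lambda>x. B x ^ 2)
      + (expectation (\<lambda>x. A x * B x))^2"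
proof -
  note F = gp_facts[OF G]
  have gA: "gl A" and gB: "gl B" by (rule F(1), rule F(2))
  define m where "m i j = expectation (\<lambda>x. A x ^ i * B x ^ j)" for i j
  have I: "\<And>i j. i + j \<le> 4 \<Longrightarrow> integrable M (\<lambda>x. A x ^ i * B x ^ j)"
    by (rule mono_int[OF gA gB])
  have m0: "m 0 0 = 1" "m 1 0 = 0" "m 0 1 = 0" "m 2 1 = 0" "m 1 2 = 0"
    using gA gB F(3,4) by (simp_all add: m_def gl_def prob_space)
  have m22: "m 2 2 = m 2 0 * m 0 2 + 2 * (m 1 1)^2" using F(5) by (simp add: m_def)
  have e1: "(\<lambda>x. (a + A x) * (b + B x)) = (\<lambda>x. (a*b) * (A x ^ 0 * B x ^ 0) + a * (A x ^ 0 * B x ^ 1) + b * (A x ^ 1 * B x ^ 0) + 1 * (A x ^ 1 * B x ^ 1) + 0 * (A x ^ 0 * B x ^ 0))"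
    by (simp add: fun_eq_iff algebra_simps)
  have e2: "(\<lambda>x. ((a + A x) * (b + B x))^2) = (\<lambda>x. (a^2*b^2) * (A x ^ 0 * B x ^ 0) + (2*a^2*b) * (A x ^ 0 * B x ^ 1) + a^2 * (A x ^ 0 * B x ^ 2)
     + (2*a*b^2) * (A x ^ 1 * B x ^ 0) + (4*a*b) * (A x ^ 1 * B x ^ 1) + (2*a) * (A x ^ 1 * B x ^ 2)
     + b^2 * (A x ^ 2 * B x ^ 0) + (2*b) * (A x ^ 2 * B x ^ 1) + 1 * (A x ^ 2 * B x ^ 2))"
    by (simp add: fun_eq_iff eval_nat_numeral algebra_simps)
  have i1: "integrable M (\<lambda>x. (a + A x) * (b + B x))"
    unfolding e1 by (rule int_lin5(2)) (rule I, simp)+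
  have i2: "integrable M (\<lambda>x. ((a + A x) * (b + B x))^2)"
    unfolding e2 by (rule int_lin9(2)) (rule I, simp)+
  have E1: "expectation (\<lambda>x. (a + A x) * (b + B x)) = a*b * m 0 0 + a * m 0 1 + b * m 1 0 + 1 * m 1 1 + 0 * m 0 0"
    unfolding e1 m_def by (rule int_lin5(1)) (rule I, simp)+
  have E2: "expectation (\<lambda>x. ((a + A x) * (b + B x))^2) = (a^2*b^2) * m 0 0 + (2*a^2*b) * m 0 1 + a^2 * m 0 2
     + (2*a*b^2) * m 1 0 + (4*a*b) * m 1 1 + (2*a) * m 1 2 + b^2 * m 2 0 + (2*b) * m 2 1 + 1 * m 2 2"
    unfolding e2 m_def by (rule int_lin9(1)) (rule I, simp)+
  have "variance (\<lambda>x. (a + A x) * (b + B x)) = expectation (\<lambda>x. ((a + A x) * (b + B x))^2) - (expectation (\<lambda>x. (a + A x) * (b + B x)))^2"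
    by (rule variance_eq[OF i1 i2])
  also have "\<dots> = a^2 * m 0 2 + b^2 * m 2 0 + 2 * a * b * m 1 1 + m 2 0 * m 0 2 + (m 1 1)^2"
    unfolding E1 E2 m0 m22 by (simp add: power2_eq_square algebra_simps)
  finally show ?thesis by (simp add: m_def)
qed

end

context prob_space begin

lemma fatou_real:
  fixes h :: "nat \<Rightarrow> 'a \<Rightarrow> real" and H :: "'a \<Rightarrow> real"
  assumes hm: "\<And>m. h m \<in> borel_measurable M" and Hm: "H \<in> borel_measurable M"
    and hpos: "\<And>m x. 0 \<le> h m x" and lim: "AE x in M. (\<lambda>m. h m x) \<longlonglongrightarrow> H x"
    and hi: "\<And>m. integrable M (h m)" and hb: "\<And>m. expectation (h m) \<le> B"
  shows "integrable M H" "expectation H \<le> B"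
proof -
  have B0: "0 \<le> B" using hb[of 0] integral_nonneg_AE[of "h 0" M] hpos by (meson AE_I2 order_trans)
  have Hpos: "AE x in M. 0 \<le> H x"
    using lim by eventually_elim (rule LIMSEQ_le_const, auto intro: hpos)
  have "(\<integral>\<^sup>+x. ennreal (H x) \<partial>M) = (\<integral>\<^sup>+x. liminf (\<lambda>m. ennreal (h m x)) \<partial>M)"
  proof (rule nn_integral_cong_AE)
    show "AE x in M. ennreal (H x) = liminf (\<lambda>m. ennreal (h m x))"
      using lim
    proof eventually_elim
      case (elim x)
      then have "(\<lambda>m. ennreal (h m x)) \<longlonglongrightarrow> ennreal (H x)" by (rule tendsto_ennrealI)
      then show ?case by (simp add: lim_imp_Liminf)
    qed
  qed
  also have "\<dots> \<le> liminf (\<lambda>m. \<integral>\<^sup>+x. ennreal (h m x) \<partial>M)"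
    by (rule nn_integral_liminf) (use hm in auto)
  also have "\<dots> \<le> ennreal B"
  proof -
    have e: "(\<integral>\<^sup>+x. ennreal (h m x) \<partial>M) = ennreal (expectation (h m))" for m
      using hi hpos by (intro nn_integral_eq_integral) auto
    have "limsup (\<lambda>m. \<integral>\<^sup>+x. ennreal (h m x) \<partial>M) \<le> ennreal B"
      by (rule Limsup_bounded) (auto simp: e hb intro!: always_eventually ennreal_leI)
    then show ?thesis using Liminf_le_Limsup[of sequentially] by (meson order_trans trivial_limit_sequentially)
  qed
  finally have nn: "(\<integral>\<^sup>+x. ennreal (H x) \<partial>M) \<le> ennreal B" .
  show iH: "integrable M H"
    by (rule integrableI_nonneg[OF Hm Hpos]) (use nn in \<open>auto simp: top_unique intro: le_less_trans\<close>)
  have "ennreal (expectation H) = (\<integral>\<^sup>+x. ennreal (H x) \<partial>M)"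
    using iH Hpos by (intro nn_integral_eq_integral[symmetric]) auto
  then have "ennreal (expectation H) \<le> ennreal B" using nn by simp
  then show "expectation H \<le> B" using B0 by (simp add: ennreal_le_iff)
qed

lemma sq_exp_le: 
  fixes X :: "'a \<Rightarrow> real"
  assumes "integrable M X" "integrable M (\<lambda>x. X x ^ 2)"
  shows "(expectation X)^2 \<le> expectation (\<lambda>x. X x ^ 2)"
  using variance_eq[OF assms] variance_positive[of X] by simp

lemma indep_vars_reindex_inj:
  fixes X :: "'i \<Rightarrow> 'a \<Rightarrow> real"
  assumes ind: "indep_vars (\<lambda>_. borel) X I" and inj: "inj_on f J" and sub: "f ` J \<subseteq> I"
  shows "indep_vars (\<lambda>_. borel) (\<lambda>j. X (f j)) J"
proof -
  have "indep_vars (\<lambda>j. PiM {f j} (\<lambda>_. borel)) (\<lambda>j \<omega>. restrict (\<lambda>i. X i \<omega>) {f j}) J"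
    by (rule indep_vars_restrict[OF ind]) (use inj sub in \<open>auto simp: disjoint_family_on_def inj_on_def\<close>)
  then have "indep_vars (\<lambda>_. borel) (\<lambda>j x. (\<lambda>g. g (f j)) (restrict (\<lambda>i. X i x) {f j})) J"
    by (rule indep_vars_compose2) (auto intro: measurable_component_singleton)
  then show ?thesis by simp
qed

end

lemma const_lim:
  fixes c :: real
  assumes "\<And>k. \<bar>c - x k\<bar> \<le> b k" "b \<longlonglongrightarrow> 0" "x \<longlonglongrightarrow> L"
  shows "c = L"
proof -
  have "(\<lambda>k. c - x k) \<longlonglongrightarrow> 0"
    by (rule Lim_null_comparison[OF _ assms(2)]) (use assms(1) in auto)
  then have "(\<lambda>k. c - (c - x k)) \<longlonglongrightarrow> c - 0" by (intro tendsto_intros)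
  then have "x \<longlonglongrightarrow> c" by simp
  then show ?thesis using assms(3) LIMSEQ_unique by blast
qed

locale zs = prob_space +
  fixes \<eta> :: "int \<Rightarrow> 'a \<Rightarrow> real" and \<phi> v :: real
  assumes ind: "indep_vars (\<lambda>_. borel) \<eta> UNIV"
    and gs: "\<And>j. gaussian_rv M (\<eta> j) 0 v"
    and ph0: "0 \<le> \<phi>" and ph1: "\<phi> < 1"
begin

lemma eta_gl: "gl (\<eta> j)" "expectation (\<lambda>x. \<eta> j x ^ 2) = v" "v \<ge> 0" "\<eta> j \<in> borel_measurable M"
  using gauss_moments[OF gs[of j]] gs[of j] by (auto simp: gaussian_rv_def)

lemma eta_meas[measurable]: "\<eta> j \<in> borel_measurable M"
  by (rule eta_gl(4))

lemma v0: "v \<ge> 0" by (rule eta_gl(3))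

definition Sf :: "int \<Rightarrow> nat \<Rightarrow> 'a \<Rightarrow> real" where
  "Sf s k x = (\<Sum>j<k. \<phi>^j * \<eta> (s - int j) x)"

definition Zf :: "int \<Rightarrow> 'a \<Rightarrow> real" where
  "Zf s x = (\<Sum>j. \<phi>^j * \<eta> (s - int j) x)"

lemma Zf_meas[measurable]: "Zf s \<in> borel_measurable M"
  unfolding Zf_def by measurable

lemma Sf_meas[measurable]: "Sf s k \<in> borel_measurable M"
  unfolding Sf_def by measurable

lemma P_gl:
  assumes J: "finite J"
  shows "gl (\<lambda>x. \<Sum>j\<in>J. \<phi>^j * \<eta> (s - int j) x)"
    "expectation (\<lambda>x. (\<Sum>j\<in>J. \<phi>^j * \<eta> (s - int j) x)^2) = v * (\<Sum>j\<in>J. (\<phi>^2)^j)"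
proof -
  have indJ: "indep_vars (\<lambda>_. borel) (\<lambda>j. \<eta> (s - int j)) J"
    by (rule indep_vars_reindex_inj[OF ind]) (auto simp: inj_on_def)
  show "gl (\<lambda>x. \<Sum>j\<in>J. \<phi>^j * \<eta> (s - int j) x)"
    by (rule gl_lin[OF J indJ eta_gl(1)])
  have "expectation (\<lambda>x. (\<Sum>j\<in>J. \<phi>^j * \<eta> (s - int j) x)^2)
     = expectation (\<lambda>x. (\<Sum>j\<in>J. \<phi>^j * \<eta> (s - int j) x) * (\<Sum>j\<in>J. \<phi>^j * \<eta> (s - int j) x))"
    by (simp add: power2_eq_square)
  also have "\<dots> = (\<Sum>j\<in>J. \<phi>^j * \<phi>^j * expectation (\<lambda>x. \<eta> (s - int j) x ^ 2))"
    by (rule lin_cov[OF J indJ eta_gl(1)])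
  also have "\<dots> = (\<Sum>j\<in>J. v * (\<phi>^2)^j)"
  proof (intro sum.cong refl)
    fix j
    have pp: "(\<phi>^2)^j = \<phi>^j*\<phi>^j" by (simp add: power2_eq_square power_mult_distrib)
    show "\<phi>^j * \<phi>^j * expectation (\<lambda>x. \<eta> (s - int j) x ^ 2) = v * (\<phi>^2)^j"
      by (simp only: eta_gl(2) pp) simp
  qed
  also have "\<dots> = v * (\<Sum>j\<in>J. (\<phi>^2)^j)"
    by (simp add: sum_distrib_left)
  finally show "expectation (\<lambda>x. (\<Sum>j\<in>J. \<phi>^j * \<eta> (s - int j) x)^2) = v * (\<Sum>j\<in>J. (\<phi>^2)^j)" .
qed

lemma eta_abs_nn: "(\<integral>\<^sup>+x. ennreal \<bar>\<eta> j x\<bar> \<partial>M) \<le> ennreal (1 + v)"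
proof -
  have i2: "integrable M (\<lambda>x. \<eta> j x ^ 2)" using gl_int[OF eta_gl(1)[of j], of 2] by simp
  have "(\<integral>\<^sup>+x. ennreal \<bar>\<eta> j x\<bar> \<partial>M) \<le> (\<integral>\<^sup>+x. ennreal (1 + \<eta> j x ^ 2) \<partial>M)"
  proof (rule nn_integral_mono)
    fix x
    have "\<bar>\<eta> j x\<bar> \<le> 1 + \<eta> j x ^ 2"
    proof (cases "\<bar>\<eta> j x\<bar> \<le> 1")
      case True then show ?thesis by (smt (verit) zero_le_power2)
    next
      case False
      then have "\<bar>\<eta> j x\<bar> * 1 \<le> \<bar>\<eta> j x\<bar> * \<bar>\<eta> j x\<bar>" by (intro mult_left_mono) auto
      then show ?thesis by (simp add: power2_eq_square)
    qed
    then show "ennreal \<bar>\<eta> j x\<bar> \<le> ennreal (1 + \<eta> j x ^ 2)" by (rule ennreal_leI)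
  qed
  also have "\<dots> = ennreal (expectation (\<lambda>x. 1 + \<eta> j x ^ 2))"
    using i2 by (intro nn_integral_eq_integral) auto
  also have "expectation (\<lambda>x. 1 + \<eta> j x ^ 2) = 1 + v"
    using i2 eta_gl(2)[of j] by (simp add: prob_space)
  finally show ?thesis .
qed

lemma AE_summ: "AE x in M. summable (\<lambda>j. \<phi>^j * \<bar>\<eta> (s - int j) x\<bar>)"
proof -
  let ?f = "\<lambda>j x. ennreal (\<phi>^j * \<bar>\<eta> (s - int j) x\<bar>)"
  have "(\<integral>\<^sup>+x. (\<Sum>j. ?f j x) \<partial>M) = (\<Sum>j. \<integral>\<^sup>+x. ?f j x \<partial>M)"
    by (rule nn_integral_suminf) measurable
  also have "\<dots> \<le> (\<Sum>j. ennreal (\<phi>^j * (1 + v)))"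
  proof (rule suminf_le)
    fix j
    have "(\<integral>\<^sup>+x. ?f j x \<partial>M) = ennreal (\<phi>^j) * (\<integral>\<^sup>+x. ennreal \<bar>\<eta> (s - int j) x\<bar> \<partial>M)"
      using ph0 by (subst nn_integral_cmult[symmetric]) (auto simp: ennreal_mult)
    also have "\<dots> \<le> ennreal (\<phi>^j) * ennreal (1 + v)"
      by (rule mult_left_mono[OF eta_abs_nn]) simp
    finally show "(\<integral>\<^sup>+x. ?f j x \<partial>M) \<le> ennreal (\<phi>^j * (1 + v))"
      using ph0 v0 by (simp add: ennreal_mult)
  qed auto
  also have "\<dots> = ennreal (\<Sum>j. \<phi>^j * (1 + v))"
    using ph0 ph1 v0 by (intro suminf_ennreal2) (auto intro!: summable_mult2 summable_geometric)
  also have "\<dots> < \<infinity>" by simp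
  finally have "(\<integral>\<^sup>+x. (\<Sum>j. ?f j x) \<partial>M) \<noteq> \<infinity>" by simp
  then have "AE x in M. (\<Sum>j. ?f j x) \<noteq> \<infinity>"
    by (intro nn_integral_PInf_AE) measurable
  then show ?thesis
    by eventually_elim (rule summable_suminf_not_top, use ph0 in auto)
qed

lemma Zf_split:
  assumes sm: "summable (\<lambda>j. \<phi>^j * \<bar>\<eta> (s - int j) x\<bar>)"
  shows "Zf s x = Sf s k x + \<phi>^k * Zf (s - int k) x"
proof -
  let ?f = "\<lambda>j. \<phi>^j * \<eta> (s - int j) x"
  have "summable (\<lambda>j. \<bar>?f j\<bar>)" using sm ph0 by (simp add: abs_mult)
  then have sf: "summable ?f" by (rule summable_rabs_cancel)
  have "Zf s x = (\<Sum>n. ?f (n + k)) + (\<Sum>i<k. ?f i)"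
    unfolding Zf_def by (rule suminf_split_initial_segment[OF sf])
  moreover have "(\<Sum>n. ?f (n + k)) = \<phi>^k * Zf (s - int k) x"
  proof (cases "\<phi>^k = 0")
    case True
    then have "\<phi> = 0" "k > 0" by (auto simp: gr0I)
    then show ?thesis by (simp add: True zero_power)
  next
    case False
    have e: "?f (n + k) = \<phi>^k * (\<phi>^n * \<eta> (s - int k - int n) x)" for n
      by (simp add: power_add algebra_simps)
    have "summable (\<lambda>n. ?f (n + k))" using summable_iff_shift[of ?f k] sf by blast
    then have "summable (\<lambda>n. \<phi>^k * (\<phi>^n * \<eta> (s - int k - int n) x))" by (simp only: e)
    then have "summable (\<lambda>n. \<phi>^n * \<eta> (s - int k - int n) x)" using False by (rule summable_mult_D)
    then show ?thesis unfolding e Zf_def by (rule suminf_mult)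
  qed
  ultimately show ?thesis by (simp add: Sf_def)
qed

end

context prob_space begin

lemma add_moments:
  fixes L X :: "'a \<Rightarrow> real"
  assumes ind: "indep_var borel L borel X" and gL: "gl L" and mX: "X \<in> borel_measurable M"
    and iX4: "integrable M (\<lambda>x. X x ^ 4)"
  shows "expectation (\<lambda>x. L x + X x) = expectation X"
    "expectation (\<lambda>x. (L x + X x)^2) = expectation (\<lambda>x. L x ^ 2) + expectation (\<lambda>x. X x ^ 2)"
    "expectation (\<lambda>x. (L x + X x)^3) = 3 * expectation (\<lambda>x. L x ^ 2) * expectation X + expectation (\<lambda>x. X x ^ 3)"
    "expectation (\<lambda>x. (L x + X x)^4) = 3 * (expectation (\<lambda>x. L x ^ 2))^2
        + 6 * expectation (\<lambda>x. L x ^ 2) * expectation (\<lambda>x. X x ^ 2) + expectation (\<lambda>x. X x ^ 4)"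
proof -
  have iL: "\<And>k. k \<le> 4 \<Longrightarrow> integrable M (\<lambda>x. L x ^ k)"
    using gL unfolding gl_def using integrable_pow_le4 by blast
  have iX: "\<And>k. k \<le> 4 \<Longrightarrow> integrable M (\<lambda>x. X x ^ k)"
    using mX iX4 integrable_pow_le4 by blast
  have iP: "\<And>a b. a \<le> 4 \<Longrightarrow> b \<le> 4 \<Longrightarrow> integrable M (\<lambda>x. L x ^ a * X x ^ b)"
    by (rule indep_pow_mult(1)[OF ind iL iX])
  have eP: "\<And>a b. a \<le> 4 \<Longrightarrow> b \<le> 4 \<Longrightarrow> expectation (\<lambda>x. L x ^ a * X x ^ b) = expectation (\<lambda>x. L x ^ a) * expectation (\<lambda>x. X x ^ b)"
    by (rule indep_pow_mult(2)[OF ind iL iX])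
  have E0: "expectation (\<lambda>x. L x ^ 0) = 1" "expectation (\<lambda>x. X x ^ 0) = 1" by (simp_all add: prob_space)
  have E1: "expectation (\<lambda>x. L x ^ 1) = 0" using gL by (simp_all add: gl_def)
  have E3: "expectation (\<lambda>x. L x ^ 3) = 0" using gL by (simp_all add: gl_def)
  have E4: "expectation (\<lambda>x. L x ^ 4) = 3 * (expectation (\<lambda>x. L x ^ 2))^2" using gL by (simp_all add: gl_def)
  have m0: "expectation L = 0" "prob (space M) = 1" using gL by (simp_all add: gl_def prob_space)
  have e00: "expectation (\<lambda>x. L x ^ 0 * X x ^ 0) = expectation (\<lambda>x. L x ^ 0) * expectation (\<lambda>x. X x ^ 0)" by (rule eP) simp_all
  have i00: "integrable M (\<lambda>x. L x ^ 0 * X x ^ 0)" by (rule iP) simp_all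
  have e01: "expectation (\<lambda>x. L x ^ 0 * X x ^ 1) = expectation (\<lambda>x. L x ^ 0) * expectation (\<lambda>x. X x ^ 1)" by (rule eP) simp_all
  have i01: "integrable M (\<lambda>x. L x ^ 0 * X x ^ 1)" by (rule iP) simp_all
  have e02: "expectation (\<lambda>x. L x ^ 0 * X x ^ 2) = expectation (\<lambda>x. L x ^ 0) * expectation (\<lambda>x. X x ^ 2)" by (rule eP) simp_all
  have i02: "integrable M (\<lambda>x. L x ^ 0 * X x ^ 2)" by (rule iP) simp_all
  have e03: "expectation (\<lambda>x. L x ^ 0 * X x ^ 3) = expectation (\<lambda>x. L x ^ 0) * expectation (\<lambda>x. X x ^ 3)" by (rule eP) simp_all
  have i03: "integrable M (\<lambda>x. L x ^ 0 * X x ^ 3)" by (rule iP) simp_all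
  have e04: "expectation (\<lambda>x. L x ^ 0 * X x ^ 4) = expectation (\<lambda>x. L x ^ 0) * expectation (\<lambda>x. X x ^ 4)" by (rule eP) simp_all
  have i04: "integrable M (\<lambda>x. L x ^ 0 * X x ^ 4)" by (rule iP) simp_all
  have e10: "expectation (\<lambda>x. L x ^ 1 * X x ^ 0) = expectation (\<lambda>x. L x ^ 1) * expectation (\<lambda>x. X x ^ 0)" by (rule eP) simp_all
  have i10: "integrable M (\<lambda>x. L x ^ 1 * X x ^ 0)" by (rule iP) simp_all
  have e11: "expectation (\<lambda>x. L x ^ 1 * X x ^ 1) = expectation (\<lambda>x. L x ^ 1) * expectation (\<lambda>x. X x ^ 1)" by (rule eP) simp_all
  have i11: "integrable M (\<lambda>x. L x ^ 1 * X x ^ 1)" by (rule iP) simp_all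
  have e12: "expectation (\<lambda>x. L x ^ 1 * X x ^ 2) = expectation (\<lambda>x. L x ^ 1) * expectation (\<lambda>x. X x ^ 2)" by (rule eP) simp_all
  have i12: "integrable M (\<lambda>x. L x ^ 1 * X x ^ 2)" by (rule iP) simp_all
  have e13: "expectation (\<lambda>x. L x ^ 1 * X x ^ 3) = expectation (\<lambda>x. L x ^ 1) * expectation (\<lambda>x. X x ^ 3)" by (rule eP) simp_all
  have i13: "integrable M (\<lambda>x. L x ^ 1 * X x ^ 3)" by (rule iP) simp_all
  have e20: "expectation (\<lambda>x. L x ^ 2 * X x ^ 0) = expectation (\<lambda>x. L x ^ 2) * expectation (\<lambda>x. X x ^ 0)" by (rule eP) simp_all
  have i20: "integrable M (\<lambda>x. L x ^ 2 * X x ^ 0)" by (rule iP) simp_all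
  have e21: "expectation (\<lambda>x. L x ^ 2 * X x ^ 1) = expectation (\<lambda>x. L x ^ 2) * expectation (\<lambda>x. X x ^ 1)" by (rule eP) simp_all
  have i21: "integrable M (\<lambda>x. L x ^ 2 * X x ^ 1)" by (rule iP) simp_all
  have e22: "expectation (\<lambda>x. L x ^ 2 * X x ^ 2) = expectation (\<lambda>x. L x ^ 2) * expectation (\<lambda>x. X x ^ 2)" by (rule eP) simp_all
  have i22: "integrable M (\<lambda>x. L x ^ 2 * X x ^ 2)" by (rule iP) simp_all
  have e30: "expectation (\<lambda>x. L x ^ 3 * X x ^ 0) = expectation (\<lambda>x. L x ^ 3) * expectation (\<lambda>x. X x ^ 0)" by (rule eP) simp_all
  have i30: "integrable M (\<lambda>x. L x ^ 3 * X x ^ 0)" by (rule iP) simp_all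
  have e31: "expectation (\<lambda>x. L x ^ 3 * X x ^ 1) = expectation (\<lambda>x. L x ^ 3) * expectation (\<lambda>x. X x ^ 1)" by (rule eP) simp_all
  have i31: "integrable M (\<lambda>x. L x ^ 3 * X x ^ 1)" by (rule iP) simp_all
  have e40: "expectation (\<lambda>x. L x ^ 4 * X x ^ 0) = expectation (\<lambda>x. L x ^ 4) * expectation (\<lambda>x. X x ^ 0)" by (rule eP) simp_all
  have i40: "integrable M (\<lambda>x. L x ^ 4 * X x ^ 0)" by (rule iP) simp_all
  note ee = e00 e01 e02 e03 e04 e10 e11 e12 e13 e20 e21 e22 e30 e31 e40
  have p1: "\<And>x. (L x + X x) = 0 * (L x ^ 4 * X x ^ 0) + 0 * (L x ^ 3 * X x ^ 1) + 0 * (L x ^ 2 * X x ^ 2) + 1 * (L x ^ 1 * X x ^ 0) + 1 * (L x ^ 0 * X x ^ 1)"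
    by simp
  have p2: "\<And>x. (L x + X x)^2 = 0 * (L x ^ 4 * X x ^ 0) + 0 * (L x ^ 3 * X x ^ 1) + 1 * (L x ^ 2 * X x ^ 0) + 2 * (L x ^ 1 * X x ^ 1) + 1 * (L x ^ 0 * X x ^ 2)"
    by (simp add: power2_eq_square algebra_simps)
  have p3: "\<And>x. (L x + X x)^3 = 1 * (L x ^ 3 * X x ^ 0) + 3 * (L x ^ 2 * X x ^ 1) + 3 * (L x ^ 1 * X x ^ 2) + 1 * (L x ^ 0 * X x ^ 3) + 0 * (L x ^ 0 * X x ^ 0)"
    by (simp add: power2_eq_square power3_eq_cube algebra_simps)
  have p4: "\<And>x. (L x + X x)^4 = 1 * (L x ^ 4 * X x ^ 0) + 4 * (L x ^ 3 * X x ^ 1) + 6 * (L x ^ 2 * X x ^ 2) + 4 * (L x ^ 1 * X x ^ 3) + 1 * (L x ^ 0 * X x ^ 4)"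
    by (simp add: eval_nat_numeral algebra_simps)
  show "expectation (\<lambda>x. L x + X x) = expectation X"
    unfolding p1 by (subst int_lin5(1)[OF i40 i31 i22 i10 i01], simp only: ee, simp add: E0 E1 m0)
  show "expectation (\<lambda>x. (L x + X x)^2) = expectation (\<lambda>x. L x ^ 2) + expectation (\<lambda>x. X x ^ 2)"
    unfolding p2 by (subst int_lin5(1)[OF i40 i31 i20 i11 i02], simp only: ee, simp add: E0 E1 m0)
  show "expectation (\<lambda>x. (L x + X x)^3) = 3 * expectation (\<lambda>x. L x ^ 2) * expectation X + expectation (\<lambda>x. X x ^ 3)"
    unfolding p3 by (subst int_lin5(1)[OF i30 i21 i12 i03 i00], simp only: ee, simp add: E0 E1 E3 m0)
  show "expectation (\<lambda>x. (L x + X x)^4) = 3 * (expectation (\<lambda>x. L x ^ 2))^2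
        + 6 * expectation (\<lambda>x. L x ^ 2) * expectation (\<lambda>x. X x ^ 2) + expectation (\<lambda>x. X x ^ 4)"
    unfolding p4 by (subst int_lin5(1)[OF i40 i31 i22 i13 i04], simp only: ee, simp add: E0 E1 E3 E4 m0)
qed

end

context zs begin

lemma indep_SQ: "indep_var borel (Sf s k) borel (\<lambda>x. \<phi>^k * Zf (s - int k) x)"
proof -
  define A where "A = (\<lambda>j. s - int j) ` {..<k}"
  define B where "B = {i. i \<le> s - int k}"
  have AB: "A \<inter> B = {}" by (auto simp: A_def B_def)
  have i: "indep_var (PiM A (\<lambda>_. borel)) (\<lambda>\<omega>. restrict (\<lambda>i. \<eta> i \<omega>) A) (PiM B (\<lambda>_. borel)) (\<lambda>\<omega>. restrict (\<lambda>i. \<eta> i \<omega>) B)"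
    by (rule indep_var_restrict[OF ind AB]) auto
  define F where "F g = (\<Sum>j<k. \<phi>^j * g (s - int j))" for g :: "int \<Rightarrow> real"
  define G where "G g = \<phi>^k * (\<Sum>n. \<phi>^n * g (s - int k - int n))" for g :: "int \<Rightarrow> real"
  have Fm: "F \<in> borel_measurable (PiM A (\<lambda>_. borel))"
    unfolding F_def
    by (intro borel_measurable_sum borel_measurable_times borel_measurable_const measurable_component_singleton[where M="\<lambda>_. borel", simplified]) (auto simp: A_def)
  have Gm: "G \<in> borel_measurable (PiM B (\<lambda>_. borel))"
    unfolding G_def
    by (intro borel_measurable_suminf borel_measurable_times borel_measurable_const measurable_component_singleton[where M="\<lambda>_. borel", simplified]) (auto simp: B_def)
  have "indep_var borel (F \<circ> (\<lambda>\<omega>. restrict (\<lambda>i. \<eta> i \<omega>) A)) borel (G \<circ> (\<lambda>\<omega>. restrict (\<lambda>i. \<eta> i \<omega>) B))"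
    by (rule indep_var_compose[OF i Fm Gm])
  moreover have "F \<circ> (\<lambda>\<omega>. restrict (\<lambda>i. \<eta> i \<omega>) A) = Sf s k"
    by (auto simp: fun_eq_iff F_def Sf_def A_def intro!: sum.cong)
  moreover have "G \<circ> (\<lambda>\<omega>. restrict (\<lambda>i. \<eta> i \<omega>) B) = (\<lambda>x. \<phi>^k * Zf (s - int k) x)"
    by (auto simp: fun_eq_iff G_def Zf_def B_def)
  ultimately show ?thesis by simp
qed

lemma diff_sum: "Sf s (m + k) x - Sf s k x = (\<Sum>j\<in>{k..<m+k}. \<phi>^j * \<eta> (s - int j) x)"
proof -
  have e: "{..<m+k} = {..<k} \<union> {k..<m+k}" by auto
  have "Sf s (m + k) x = (\<Sum>j\<in>{..<k} \<union> {k..<m+k}. \<phi>^j * \<eta> (s - int j) x)"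
    unfolding Sf_def e ..
  also have "\<dots> = Sf s k x + (\<Sum>j\<in>{k..<m+k}. \<phi>^j * \<eta> (s - int j) x)"
    unfolding Sf_def by (rule sum.union_disjoint) auto
  finally show ?thesis by simp
qed

lemma geo_tail: "(\<Sum>j\<in>{k..<m+k}. (\<phi>^2)^j) \<le> (\<phi>^2)^k / (1 - \<phi>^2)"
proof -
  have q0: "0 \<le> \<phi>^2" and q1: "\<phi>^2 < 1" using ph0 ph1 by (auto simp: power_less_one_iff abs_square_less_1)
  have "(\<Sum>j\<in>{k..<m+k}. (\<phi>^2)^j) = (\<Sum>i\<in>{0..<m}. (\<phi>^2)^(i+k))"
    using sum.shift_bounds_nat_ivl[of "\<lambda>j. (\<phi>^2)^j" 0 k m] by simp
  also have "\<dots> = (\<phi>^2)^k * (\<Sum>i<m. (\<phi>^2)^i)"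
    by (simp add: power_add sum_distrib_left atLeast0LessThan mult.commute)
  also have "(\<Sum>i<m. (\<phi>^2)^i) = (1 - (\<phi>^2)^m) / (1 - \<phi>^2)"
    using q1 by (simp add: sum_gp_strict)
  also have "\<dots> \<le> 1 / (1 - \<phi>^2)"
    using q0 q1 by (intro divide_right_mono) auto
  finally show ?thesis using q0 by (simp add: mult_left_mono divide_simps split: if_splits)
qed

lemma Tl_bounds:
  fixes s :: int and k :: nat
  defines "\<tau> \<equiv> v * (\<phi>^2)^k / (1 - \<phi>^2)"
  shows "integrable M (\<lambda>x. (Zf s x - Sf s k x)^2)" "expectation (\<lambda>x. (Zf s x - Sf s k x)^2) \<le> \<tau>"
    "integrable M (\<lambda>x. (Zf s x - Sf s k x)^4)" "expectation (\<lambda>x. (Zf s x - Sf s k x)^4) \<le> 3 * \<tau>^2"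
proof -
  have q1: "\<phi>^2 < 1" using ph0 ph1 by (auto simp: abs_square_less_1)
  have t0: "0 \<le> \<tau>" unfolding \<tau>_def using v0 q1 by (auto intro!: divide_nonneg_pos)
  define D where "D m x = (\<Sum>j\<in>{k..<m+k}. \<phi>^j * \<eta> (s - int j) x)" for m x
  have Dgl: "gl (D m)" for m unfolding D_def by (rule P_gl) simp
  have D2: "expectation (\<lambda>x. (D m x)^2) \<le> \<tau>" for m
  proof -
    have "expectation (\<lambda>x. (D m x)^2) = v * (\<Sum>j\<in>{k..<m+k}. (\<phi>^2)^j)"
      unfolding D_def by (rule P_gl) simp
    also have "\<dots> \<le> v * ((\<phi>^2)^k / (1 - \<phi>^2))"
      by (rule mult_left_mono[OF geo_tail v0])
    finally show ?thesis by (simp add: \<tau>_def)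
  qed
  have D2p: "0 \<le> expectation (\<lambda>x. (D m x)^2)" for m by (rule integral_nonneg_AE) auto
  have D4: "expectation (\<lambda>x. (D m x)^4) \<le> 3 * \<tau>^2" for m
  proof -
    have "expectation (\<lambda>x. (D m x)^4) = 3 * (expectation (\<lambda>x. (D m x)^2))^2"
      using Dgl[of m] by (simp add: gl_def)
    also have "\<dots> \<le> 3 * \<tau>^2"
      using D2[of m] D2p[of m] by (intro mult_left_mono power_mono) auto
    finally show ?thesis .
  qed
  have lim: "AE x in M. (\<lambda>m. D m x) \<longlonglongrightarrow> Zf s x - Sf s k x"
    using AE_summ[of s]
  proof eventually_elim
    case (elim x)
    have "summable (\<lambda>j. \<bar>\<phi>^j * \<eta> (s - int j) x\<bar>)" using elim ph0 by (simp add: abs_mult)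
    then have "summable (\<lambda>j. \<phi>^j * \<eta> (s - int j) x)" by (rule summable_rabs_cancel)
    then have "(\<lambda>n. Sf s n x) \<longlonglongrightarrow> Zf s x" unfolding Sf_def Zf_def by (rule summable_LIMSEQ)
    then have "(\<lambda>m. Sf s (m + k) x) \<longlonglongrightarrow> Zf s x" by (rule LIMSEQ_ignore_initial_segment)
    then have "(\<lambda>m. Sf s (m + k) x - Sf s k x) \<longlonglongrightarrow> Zf s x - Sf s k x" by (intro tendsto_intros)
    then show ?case by (simp add: D_def diff_sum)
  qed
  have Dm: "D m \<in> borel_measurable M" for m unfolding D_def by measurable
  have "integrable M (\<lambda>x. (Zf s x - Sf s k x)^2) \<and> expectation (\<lambda>x. (Zf s x - Sf s k x)^2) \<le> \<tau>"
  proof (intro conjI)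
    have l2: "AE x in M. (\<lambda>m. (D m x)^2) \<longlonglongrightarrow> (Zf s x - Sf s k x)^2"
      using lim by eventually_elim (intro tendsto_intros)
    show "integrable M (\<lambda>x. (Zf s x - Sf s k x)^2)"
      by (rule fatou_real(1)[OF _ _ _ l2 _ D2]) (use Dm gl_int[OF Dgl] in auto)
    show "expectation (\<lambda>x. (Zf s x - Sf s k x)^2) \<le> \<tau>"
      by (rule fatou_real(2)[OF _ _ _ l2 _ D2]) (use Dm gl_int[OF Dgl] in auto)
  qed
  then show "integrable M (\<lambda>x. (Zf s x - Sf s k x)^2)" "expectation (\<lambda>x. (Zf s x - Sf s k x)^2) \<le> \<tau>" by auto
  have l4: "AE x in M. (\<lambda>m. (D m x)^4) \<longlonglongrightarrow> (Zf s x - Sf s k x)^4"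
    using lim by eventually_elim (intro tendsto_intros)
  show "integrable M (\<lambda>x. (Zf s x - Sf s k x)^4)"
    by (rule fatou_real(1)[OF _ _ _ l4 _ D4]) (use Dm gl_int[OF Dgl] in \<open>auto simp: zero_le_even_power\<close>)
  show "expectation (\<lambda>x. (Zf s x - Sf s k x)^4) \<le> 3 * \<tau>^2"
    by (rule fatou_real(2)[OF _ _ _ l4 _ D4]) (use Dm gl_int[OF Dgl] in \<open>auto simp: zero_le_even_power\<close>)
qed

end

lemma pow4_sum_le: "((a::real) + b)^4 \<le> 8 * (a^4 + b^4)"
proof -
  have h1: "(a + b)^2 \<le> 2 * (a^2 + b^2)" using zero_le_power2[of "a - b"] by (simp add: power2_eq_square algebra_simps)
  have h2: "(a^2 + b^2)^2 \<le> 2 * (a^4 + b^4)" using zero_le_power2[of "a^2 - b^2"] by (simp add: power2_eq_square algebra_simps eval_nat_numeral)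
  have "(a + b)^4 = ((a+b)^2)^2" by simp
  also have "\<dots> \<le> (2 * (a^2 + b^2))^2" using h1 by (intro power_mono) auto
  also have "\<dots> = 4 * (a^2 + b^2)^2" by (simp add: power2_eq_square algebra_simps)
  also have "\<dots> \<le> 8 * (a^4 + b^4)" using h2 by simp
  finally show ?thesis .
qed

lemma cube_le: "\<bar>(q::real)^3\<bar> \<le> q^2 + q^4"
proof (cases "\<bar>q\<bar> \<le> 1")
  case True
  have "\<bar>q^3\<bar> = \<bar>q\<bar> * q^2" by (simp add: power_abs eval_nat_numeral abs_mult)
  also have "\<dots> \<le> 1 * q^2" using True by (intro mult_right_mono) auto
  finally have "\<bar>q^3\<bar> \<le> q^2" by simp
  moreover have "0 \<le> q^4" by (simp add: zero_le_even_power)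
  ultimately show ?thesis by linarith
next
  case False
  have "\<bar>q^3\<bar> = \<bar>q\<bar> ^ 3" by (simp add: power_abs)
  also have "\<dots> \<le> \<bar>q\<bar> ^ 4" using False by (intro power_increasing) auto
  finally have "\<bar>q^3\<bar> \<le> q^4" by (simp add: power_even_abs_numeral)
  moreover have "0 \<le> q^2" by simp
  ultimately show ?thesis by linarith
qed

context zs begin

lemma Zf_gl: "gl (Zf s)" "expectation (\<lambda>x. Zf s x ^ 2) = v / (1 - \<phi>^2)"
proof -
  define \<sigma>2 where "\<sigma>2 = v / (1 - \<phi>^2)"
  define \<tau> where "\<tau> k = v * (\<phi>^2)^k / (1 - \<phi>^2)" for k :: nat
  define \<sigma>k where "\<sigma>k k = v * (\<Sum>j<k. (\<phi>^2)^j)" for k :: nat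
  define Q where "Q k x = \<phi>^k * Zf (s - int k) x" for k :: nat and x
  have q0: "0 \<le> \<phi>^2" and q1: "\<phi>^2 < 1" using ph0 ph1 by (auto simp: abs_square_less_1)
  have t0: "0 \<le> \<tau> k" for k unfolding \<tau>_def using v0 q1 by (auto intro!: divide_nonneg_pos)
  have tlim: "\<tau> \<longlonglongrightarrow> 0"
  proof -
    have "(\<lambda>k. (\<phi>^2)^k) \<longlonglongrightarrow> 0" using q0 q1 by (intro LIMSEQ_power_zero) auto
    then have "(\<lambda>k. v * (\<phi>^2)^k / (1 - \<phi>^2)) \<longlonglongrightarrow> v * 0 / (1 - \<phi>^2)" using q1 by (intro tendsto_intros) auto
    then show ?thesis by (simp add: \<tau>_def[abs_def])
  qed
  have sklim: "\<sigma>k \<longlonglongrightarrow> \<sigma>2"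
  proof -
    have "(\<lambda>j. (\<phi>^2)^j) sums (1 / (1 - \<phi>^2))" using q0 q1 by (intro geometric_sums) auto
    then have "(\<lambda>k. \<Sum>j<k. (\<phi>^2)^j) \<longlonglongrightarrow> 1 / (1 - \<phi>^2)" by (simp add: sums_def)
    then have "(\<lambda>k. v * (\<Sum>j<k. (\<phi>^2)^j)) \<longlonglongrightarrow> v * (1 / (1 - \<phi>^2))" by (rule tendsto_mult_left)
    then show ?thesis by (simp add: \<sigma>k_def[abs_def] \<sigma>2_def)
  qed
  have sk0: "0 \<le> \<sigma>k k" for k unfolding \<sigma>k_def using v0 q0 ph0 by (intro mult_nonneg_nonneg sum_nonneg zero_le_power) auto
  have sk2: "\<sigma>k k \<le> \<sigma>2" for k
  proof -
    have "(\<Sum>j<k. (\<phi>^2)^j) = (1 - (\<phi>^2)^k) / (1 - \<phi>^2)" using q1 by (simp add: sum_gp_strict)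
    also have "\<dots> \<le> 1 / (1 - \<phi>^2)" using q0 q1 by (intro divide_right_mono) auto
    finally have "v * (\<Sum>j<k. (\<phi>^2)^j) \<le> v * (1 / (1 - \<phi>^2))" by (rule mult_left_mono[OF _ v0])
    then show ?thesis unfolding \<sigma>k_def \<sigma>2_def by simp
  qed
  have Sfe: "Sf s k = (\<lambda>x. \<Sum>j\<in>{..<k}. \<phi>^j * \<eta> (s - int j) x)" for k by (simp add: Sf_def[abs_def])
  have Sgl: "gl (Sf s k)" for k unfolding Sfe by (rule P_gl) simp
  have S2: "expectation (\<lambda>x. Sf s k x ^ 2) = \<sigma>k k" for k unfolding Sfe \<sigma>k_def by (rule P_gl) simp
  have Qm[measurable]: "Q k \<in> borel_measurable M" for k unfolding Q_def by measurable
  have Qmp: "(\<lambda>x. Q k x ^ p) \<in> borel_measurable M" for k p by measurable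
  have Zmp: "(\<lambda>x. Zf s x ^ p) \<in> borel_measurable M" for p by measurable
  have SQmp: "(\<lambda>x. (Sf s k x + Q k x) ^ p) \<in> borel_measurable M" for k p by measurable
  have QAE: "AE x in M. Zf s x - Sf s k x = Q k x" for k
    using AE_summ[of s] by eventually_elim (simp add: Q_def Zf_split[of s _ k])
  have iQ4: "integrable M (\<lambda>x. Q k x ^ 4)" for k
    using Tl_bounds(3)[of s k] QAE[of k] by (subst integrable_cong_AE[where g="\<lambda>x. (Zf s x - Sf s k x)^4"]) (auto simp: Qm Qmp Zmp SQmp elim: eventually_mono)
  have iQ: "\<And>j. j \<le> 4 \<Longrightarrow> integrable M (\<lambda>x. Q k x ^ j)" for k using integrable_pow_le4[OF Qm iQ4] by blast
  have EQ2: "expectation (\<lambda>x. Q k x ^ 2) \<le> \<tau> k" for k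
  proof -
    have "expectation (\<lambda>x. Q k x ^ 2) = expectation (\<lambda>x. (Zf s x - Sf s k x)^2)"
      using QAE[of k] by (intro integral_cong_AE) (auto simp: Qm Qmp Zmp SQmp elim: eventually_mono)
    then show ?thesis using Tl_bounds(2)[of s k] by (simp add: \<tau>_def)
  qed
  have EQ4: "expectation (\<lambda>x. Q k x ^ 4) \<le> 3 * (\<tau> k)^2" for k
  proof -
    have "expectation (\<lambda>x. Q k x ^ 4) = expectation (\<lambda>x. (Zf s x - Sf s k x)^4)"
      using QAE[of k] by (intro integral_cong_AE) (auto simp: Qm Qmp Zmp SQmp elim: eventually_mono)
    then show ?thesis using Tl_bounds(4)[of s k] by (simp add: \<tau>_def)
  qed
  have EQ2p: "0 \<le> expectation (\<lambda>x. Q k x ^ 2)" for k by (rule integral_nonneg_AE) auto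
  have EQ4p: "0 \<le> expectation (\<lambda>x. Q k x ^ 4)" for k by (rule integral_nonneg_AE) (auto simp: zero_le_even_power)
  have ZAE: "AE x in M. Zf s x = Sf s k x + Q k x" for k
    using QAE[of k] by eventually_elim simp
  have indQ: "indep_var borel (Sf s k) borel (Q k)" for k
    using indep_SQ[of s k] by (simp add: Q_def[abs_def])
  note AM = add_moments[OF indQ Sgl Qm iQ4]
  have EZp: "expectation (\<lambda>x. Zf s x ^ p) = expectation (\<lambda>x. (Sf s k x + Q k x) ^ p)" for p k
    using ZAE[of k] by (intro integral_cong_AE) (auto simp: Qm Qmp Zmp SQmp elim: eventually_mono)
  have Z1: "expectation (Zf s) = expectation (Q k)" for k
    using EZp[of 1 k] AM(1)[of k] by simp
  have "(expectation (Zf s))^2 = 0"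
  proof (rule const_lim)
    show "\<bar>(expectation (Zf s))^2 - 0\<bar> \<le> \<tau> k" for k
      using sq_exp_le[OF iQ[of 1 k, simplified] iQ[of 2 k, simplified]] EQ2[of k] Z1[of k] by simp
  qed (rule tlim, simp)
  then have EZ0: "expectation (Zf s) = 0" by simp
  then have EQ0: "expectation (Q k) = 0" for k using Z1[of k] by simp
  have "expectation (\<lambda>x. Zf s x ^ 2) = \<sigma>2"
  proof (rule const_lim)
    show "\<bar>expectation (\<lambda>x. Zf s x ^ 2) - \<sigma>k k\<bar> \<le> \<tau> k" for k
      using EZp[of 2 k] AM(2)[of k] S2[of k] EQ2[of k] EQ2p[of k] by simp
  qed (rule tlim, rule sklim)
  then show E2: "expectation (\<lambda>x. Zf s x ^ 2) = v / (1 - \<phi>^2)" by (simp add: \<sigma>2_def)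
  have E3: "expectation (\<lambda>x. Zf s x ^ 3) = 0"
  proof (rule const_lim)
    show "\<bar>expectation (\<lambda>x. Zf s x ^ 3) - 0\<bar> \<le> \<tau> k + 3 * (\<tau> k)^2" for k
    proof -
      have "expectation (\<lambda>x. Zf s x ^ 3) = expectation (\<lambda>x. Q k x ^ 3)"
        using EZp[of 3 k] AM(3)[of k] EQ0[of k] by simp
      also have "\<bar>\<dots>\<bar> \<le> expectation (\<lambda>x. \<bar>Q k x ^ 3\<bar>)" by (rule integral_abs_bound)
      also have "\<dots> \<le> expectation (\<lambda>x. Q k x ^ 2 + Q k x ^ 4)"
        by (rule integral_mono) (use iQ[of 3 k] iQ[of 2 k] iQ[of 4 k] cube_le in auto)
      also have "\<dots> = expectation (\<lambda>x. Q k x ^ 2) + expectation (\<lambda>x. Q k x ^ 4)"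
        using iQ[of 2 k] iQ[of 4 k] by simp
      also have "\<dots> \<le> \<tau> k + 3 * (\<tau> k)^2" using EQ2[of k] EQ4[of k] by simp
      finally show ?thesis by simp
    qed
  next
    have "(\<lambda>k. \<tau> k + 3 * (\<tau> k)^2) \<longlonglongrightarrow> 0 + 3 * 0^2" by (intro tendsto_intros tlim)
    then show "(\<lambda>k. \<tau> k + 3 * (\<tau> k)^2) \<longlonglongrightarrow> 0" by simp
  qed simp
  have E4: "expectation (\<lambda>x. Zf s x ^ 4) = 3 * \<sigma>2^2"
  proof (rule const_lim)
    show "\<bar>expectation (\<lambda>x. Zf s x ^ 4) - 3 * (\<sigma>k k)^2\<bar> \<le> 6 * \<sigma>2 * \<tau> k + 3 * (\<tau> k)^2" for k
    proof -
      have "expectation (\<lambda>x. Zf s x ^ 4) - 3 * (\<sigma>k k)^2 = 6 * \<sigma>k k * expectation (\<lambda>x. Q k x ^ 2) + expectation (\<lambda>x. Q k x ^ 4)"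
        using EZp[of 4 k] AM(4)[of k] S2[of k] by simp
      moreover have "6 * \<sigma>k k * expectation (\<lambda>x. Q k x ^ 2) \<le> 6 * \<sigma>2 * \<tau> k"
        using sk0[of k] sk2[of k] EQ2[of k] EQ2p[of k] by (intro mult_mono) auto
      moreover have "0 \<le> 6 * \<sigma>k k * expectation (\<lambda>x. Q k x ^ 2)" using sk0[of k] EQ2p[of k] by simp
      ultimately show ?thesis using EQ4[of k] EQ4p[of k] by simp
    qed
  next
    show "(\<lambda>k. 6 * \<sigma>2 * \<tau> k + 3 * (\<tau> k)^2) \<longlonglongrightarrow> 0"
      using tendsto_intros(1-100)
      by (metis (no_types) add.right_neutral mult_zero_right power_zero_numeral tendsto_add tendsto_mult_right_zero tendsto_power tlim)
  next
    show "(\<lambda>k. 3 * (\<sigma>k k)^2) \<longlonglongrightarrow> 3 * \<sigma>2^2" by (intro tendsto_intros sklim)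
  qed
  have iZ4: "integrable M (\<lambda>x. Zf s x ^ 4)"
  proof (rule Bochner_Integration.integrable_bound[where f="\<lambda>x. 8 * (Sf s 0 x ^ 4 + Q 0 x ^ 4)"])
    show "integrable M (\<lambda>x. 8 * (Sf s 0 x ^ 4 + Q 0 x ^ 4))"
      using gl_int[OF Sgl[of 0], of 4] iQ4[of 0] by simp
    show "(\<lambda>x. Zf s x ^ 4) \<in> borel_measurable M" by measurable
    show "AE x in M. norm (Zf s x ^ 4) \<le> norm (8 * (Sf s 0 x ^ 4 + Q 0 x ^ 4))"
      using ZAE[of 0]
    proof eventually_elim
      case (elim x)
      have "0 \<le> Sf s 0 x ^ 4 + Q 0 x ^ 4" by (simp add: zero_le_even_power)
      then show ?case using pow4_sum_le[of "Sf s 0 x" "Q 0 x"] elim by (simp add: zero_le_even_power)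
    qed
  qed
  show "gl (Zf s)" unfolding gl_def using EZ0 E2 E3 E4 iZ4 \<open>expectation (\<lambda>x. Zf s x ^ 2) = \<sigma>2\<close> by simp
qed

end

locale zmu = zs +
  fixes \<mu>t :: "int \<Rightarrow> 'a \<Rightarrow> real" and \<mu>0 :: real
  assumes mu_rv: "\<And>s. \<mu>t s \<in> borel_measurable M"
    and mu_rec: "\<And>s x. x \<in> space M \<Longrightarrow> \<mu>t s x = \<mu>0 + \<phi> * \<mu>t (s - 1) x + \<eta> s x"
    and mu_stat: "\<And>h. distr M (PiM UNIV (\<lambda>_. borel)) (\<lambda>x s. \<mu>t (s + h) x)
                      = distr M (PiM UNIV (\<lambda>_. borel)) (\<lambda>x s. \<mu>t s x)"
begin

lemma mu_meas[measurable]: "\<mu>t s \<in> borel_measurable M" by (rule mu_rv)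

definition "mm = \<mu>0 / (1 - \<phi>)"
definition "U s x = \<mu>t s x - mm"

lemma U_meas[measurable]: "U s \<in> borel_measurable M" unfolding U_def by measurable

lemma U_rec: "x \<in> space M \<Longrightarrow> U s x = \<phi> * U (s - 1) x + \<eta> s x"
proof -
  assume x: "x \<in> space M"
  have "mm = \<mu>0 + \<phi> * mm" using ph1 by (simp add: mm_def field_simps)
  then show ?thesis using mu_rec[OF x, of s] unfolding U_def by (simp add: algebra_simps)
qed

lemma U_expand: "x \<in> space M \<Longrightarrow> U s x = Sf s k x + \<phi>^k * U (s - int k) x"
proof (induction k)
  case 0 then show ?case by (simp add: Sf_def)
next
  case (Suc k)
  have "U (s - int k) x = \<phi> * U (s - int (Suc k)) x + \<eta> (s - int k) x"
    using U_rec[OF Suc.prems, of "s - int k"] by (simp add: algebra_simps)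
  then show ?case using Suc by (simp add: Sf_def algebra_simps)
qed

lemma path_meas: "(\<lambda>x s. \<mu>t (s + h) x) \<in> measurable M (PiM UNIV (\<lambda>_. borel))"
  by (rule measurable_PiM_single'[where f="\<lambda>s x. \<mu>t (s + h) x"]) auto

lemma mu_law: "distr M borel (\<mu>t (s + h)) = distr M borel (\<mu>t s)"
proof -
  have proj: "(\<lambda>\<omega>. \<omega> s) \<in> measurable (PiM UNIV (\<lambda>_. borel)) (borel :: real measure)"
    by (rule measurable_component_singleton) simp
  have "distr M borel (\<mu>t (s + h)) = distr M borel ((\<lambda>\<omega>. \<omega> s) \<circ> (\<lambda>x s. \<mu>t (s + h) x))"
    by (simp add: comp_def)
  also have "\<dots> = distr (distr M (PiM UNIV (\<lambda>_. borel)) (\<lambda>x s. \<mu>t (s + h) x)) borel (\<lambda>\<omega>. \<omega> s)"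
    by (rule distr_distr[symmetric, OF proj path_meas])
  also have "\<dots> = distr (distr M (PiM UNIV (\<lambda>_. borel)) (\<lambda>x s. \<mu>t (s + 0) x)) borel (\<lambda>\<omega>. \<omega> s)"
    by (simp only: mu_stat)
  also have "\<dots> = distr M borel ((\<lambda>\<omega>. \<omega> s) \<circ> (\<lambda>x s. \<mu>t (s + 0) x))"
    by (rule distr_distr[OF proj path_meas])
  finally show ?thesis by (simp add: comp_def)
qed

lemma U_law: "prob {x \<in> space M. c \<le> \<bar>U (s + h) x\<bar>} = prob {x \<in> space M. c \<le> \<bar>U s x\<bar>}"
proof -
  define A where "A = {y::real. c \<le> \<bar>y - mm\<bar>}"
  have A: "A \<in> sets borel" unfolding A_def by measurable
  have e: "{x \<in> space M. c \<le> \<bar>U t x\<bar>} = \<mu>t t -` A \<inter> space M" for t by (auto simp: A_def U_def)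
  have "emeasure (distr M borel (\<mu>t (s + h))) A = emeasure (distr M borel (\<mu>t s)) A" by (simp only: mu_law)
  then have "emeasure M {x \<in> space M. c \<le> \<bar>U (s + h) x\<bar>} = emeasure M {x \<in> space M. c \<le> \<bar>U s x\<bar>}"
    unfolding e using A by (simp add: emeasure_distr)
  then show ?thesis by (simp add: measure_def)
qed

end

context zmu begin

lemma AE_ennsum: "AE x in M. (\<Sum>j. ennreal (\<phi>^j * \<bar>\<eta> (s - int j) x\<bar>)) \<noteq> \<infinity>"
proof -
  let ?f = "\<lambda>j x. ennreal (\<phi>^j * \<bar>\<eta> (s - int j) x\<bar>)"
  have "(\<integral>\<^sup>+x. (\<Sum>j. ?f j x) \<partial>M) = (\<Sum>j. \<integral>\<^sup>+x. ?f j x \<partial>M)"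
    by (rule nn_integral_suminf) measurable
  also have "\<dots> \<le> (\<Sum>j. ennreal (\<phi>^j * (1 + v)))"
  proof (rule suminf_le)
    fix j
    have "(\<integral>\<^sup>+x. ?f j x \<partial>M) = ennreal (\<phi>^j) * (\<integral>\<^sup>+x. ennreal \<bar>\<eta> (s - int j) x\<bar> \<partial>M)"
      using ph0 by (subst nn_integral_cmult[symmetric]) (auto simp: ennreal_mult)
    also have "\<dots> \<le> ennreal (\<phi>^j) * ennreal (1 + v)"
      by (rule mult_left_mono[OF eta_abs_nn]) simp
    finally show "(\<integral>\<^sup>+x. ?f j x \<partial>M) \<le> ennreal (\<phi>^j * (1 + v))"
      using ph0 v0 by (simp add: ennreal_mult)
  qed auto
  also have "\<dots> = ennreal (\<Sum>j. \<phi>^j * (1 + v))"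
    using ph0 ph1 v0 by (intro suminf_ennreal2) (auto intro!: summable_mult2 summable_geometric)
  also have "\<dots> < \<infinity>" by simp
  finally have "(\<integral>\<^sup>+x. (\<Sum>j. ?f j x) \<partial>M) \<noteq> \<infinity>" by simp
  then show ?thesis
    by (intro nn_integral_PInf_AE) measurable
qed

lemma U_Z_AE: "AE x in M. U s x = Zf s x"
proof -
  define Sm where "Sm = {x \<in> space M. (\<Sum>j. ennreal (\<phi>^j * \<bar>\<eta> (s - int j) x\<bar>)) \<noteq> \<infinity>}"
  have Sm_sets[measurable]: "Sm \<in> sets M" unfolding Sm_def by measurable
  have AE_Sm: "AE x in M. x \<in> Sm"
    using AE_ennsum[of s] AE_space by eventually_elim (auto simp: Sm_def)
  have summ: "summable (\<lambda>j. \<phi>^j * \<bar>\<eta> (s - int j) x\<bar>)" if "x \<in> Sm" for x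
    using that ph0 by (intro summable_suminf_not_top) (auto simp: Sm_def)
  define tl where "tl k x = \<phi>^k * Zf (s - int k) x" for k x
  define D where "D x = U s x - Zf s x" for x
  have Dm[measurable]: "D \<in> borel_measurable M" unfolding D_def by measurable
  have tlm[measurable]: "tl k \<in> borel_measurable M" for k unfolding tl_def by measurable
  have Dtl: "D x = \<phi>^k * U (s - int k) x - tl k x" if "x \<in> Sm" for x k
  proof -
    have "x \<in> space M" using that by (simp add: Sm_def)
    then show ?thesis using U_expand[of x s k] Zf_split[OF summ[OF that], of k]
      by (simp add: D_def tl_def)
  qed
  have tl0: "(\<lambda>k. tl k x) \<longlonglongrightarrow> 0" if "x \<in> Sm" for x
  proof -
    have "summable (\<lambda>j. \<bar>\<phi>^j * \<eta> (s - int j) x\<bar>)" using summ[OF that] ph0 by (simp add: abs_mult)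
    then have "summable (\<lambda>j. \<phi>^j * \<eta> (s - int j) x)" by (rule summable_rabs_cancel)
    then have "(\<lambda>n. Sf s n x) \<longlonglongrightarrow> Zf s x" unfolding Sf_def Zf_def by (rule summable_LIMSEQ)
    then have "(\<lambda>k. Zf s x - Sf s k x) \<longlonglongrightarrow> Zf s x - Zf s x" by (intro tendsto_intros)
    moreover have "tl k x = Zf s x - Sf s k x" for k using Zf_split[OF summ[OF that], of k] by (simp add: tl_def)
    ultimately show ?thesis by simp
  qed
  have main: "AE x in M. x \<in> Sm \<longrightarrow> D x = 0"
  proof (cases "\<phi> = 0")
    case True
    show ?thesis by (rule AE_I2) (use Dtl[of _ 1] True in \<open>simp add: tl_def\<close>)
  next
    case False
    then have php: "\<phi> > 0" using ph0 by simp
    have P0: "prob {x \<in> space M. x \<in> Sm \<and> \<epsilon> \<le> \<bar>D x\<bar>} = 0" if eps: "\<epsilon> > 0" for \<epsilon>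
    proof -
      define c where "c k = \<epsilon> / (2 * \<phi>^k)" for k :: nat
      define A where "A k = {x \<in> space M. c k \<le> \<bar>U s x\<bar>}" for k
      define B where "B k = {x \<in> space M. x \<in> Sm \<and> (\<exists>j\<ge>k. \<epsilon> / 2 \<le> \<bar>tl j x\<bar>)}" for k
      have Asets: "A k \<in> sets M" for k unfolding A_def by measurable
      have Bsets: "B k \<in> sets M" for k unfolding B_def by measurable
      have sub: "{x \<in> space M. x \<in> Sm \<and> \<epsilon> \<le> \<bar>D x\<bar>} \<subseteq> {x \<in> space M. c k \<le> \<bar>U (s + - int k) x\<bar>} \<union> B k" for k
      proof safe
        fix x assume x: "x \<in> space M" "x \<in> Sm" "\<epsilon> \<le> \<bar>D x\<bar>" and nB: "x \<notin> B k"
        have "\<bar>tl k x\<bar> < \<epsilon> / 2" using nB x by (auto simp: B_def not_le)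
        moreover have "\<bar>D x\<bar> \<le> \<phi>^k * \<bar>U (s - int k) x\<bar> + \<bar>tl k x\<bar>"
        proof -
          have "\<bar>\<phi>^k * U (s - int k) x - tl k x\<bar> \<le> \<bar>\<phi>^k * U (s - int k) x\<bar> + \<bar>tl k x\<bar>" by (rule abs_triangle_ineq4)
          then show ?thesis using Dtl[OF x(2), of k] php by (simp add: abs_mult)
        qed
        ultimately have "\<epsilon> / 2 \<le> \<phi>^k * \<bar>U (s - int k) x\<bar>" using x(3) by linarith
        then have "\<epsilon> / (2 * \<phi>^k) \<le> \<bar>U (s - int k) x\<bar>" using php by (simp add: field_simps)
        then show "c k \<le> \<bar>U (s + - int k) x\<bar>" by (simp add: c_def)
      qed
      have le: "prob {x \<in> space M. x \<in> Sm \<and> \<epsilon> \<le> \<bar>D x\<bar>} \<le> prob (A k) + prob (B k)" for k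
      proof -
        have "prob {x \<in> space M. x \<in> Sm \<and> \<epsilon> \<le> \<bar>D x\<bar>} \<le> prob ({x \<in> space M. c k \<le> \<bar>U (s + - int k) x\<bar>} \<union> B k)"
          by (rule finite_measure_mono[OF sub]) (use Bsets in measurable)
        also have "\<dots> \<le> prob {x \<in> space M. c k \<le> \<bar>U (s + - int k) x\<bar>} + prob (B k)"
          by (rule measure_Un_le) (use Bsets in measurable)
        also have "prob {x \<in> space M. c k \<le> \<bar>U (s + - int k) x\<bar>} = prob (A k)"
          unfolding A_def by (rule U_law)
        finally show ?thesis .
      qed
      have Adec: "decseq A"
      proof (rule decseq_SucI)
        fix k
        have "c k \<le> c (Suc k)" unfolding c_def using php ph1 eps
          by (intro divide_left_mono mult_left_mono) (auto simp: mult_le_cancel_right1 mult_pos_pos)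
        then show "A (Suc k) \<subseteq> A k" by (auto simp: A_def)
      qed
      have Bdec: "decseq B" by (rule decseq_SucI) (auto simp: B_def dest: Suc_leD)
      have Aint: "(\<Inter>k. A k) = {}"
      proof safe
        fix x assume "x \<in> (\<Inter>k. A k)"
        then have xa: "c k \<le> \<bar>U s x\<bar>" for k by (auto simp: A_def)
        have "(\<lambda>k. \<phi>^k) \<longlonglongrightarrow> 0" using php ph1 by (intro LIMSEQ_power_zero) auto
        moreover have "\<epsilon> / (2 * (\<bar>U s x\<bar> + 1)) > 0" using eps by (simp add: add_pos_nonneg)
        ultimately have "eventually (\<lambda>k. \<phi>^k < \<epsilon> / (2 * (\<bar>U s x\<bar> + 1))) sequentially"
          by (rule order_tendstoD)
        then obtain k where k: "\<phi>^k < \<epsilon> / (2 * (\<bar>U s x\<bar> + 1))" by (auto simp: eventually_sequentially)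
        have pk: "\<phi>^k > 0" using php by simp
        from k have "\<phi>^k * (2 * (\<bar>U s x\<bar> + 1)) < \<epsilon>" using pk by (simp add: field_simps add_pos_nonneg)
        then have "\<bar>U s x\<bar> + 1 < c k" using pk by (simp add: c_def field_simps)
        with xa[of k] show "x \<in> {}" by simp
      qed
      have Bint: "(\<Inter>k. B k) = {}"
      proof safe
        fix x assume "x \<in> (\<Inter>k. B k)"
        then have xb: "x \<in> Sm" "\<And>k. \<exists>j\<ge>k. \<epsilon> / 2 \<le> \<bar>tl j x\<bar>" by (auto simp: B_def)
        have "eventually (\<lambda>j. \<bar>tl j x\<bar> < \<epsilon> / 2) sequentially"
          using tendsto_norm[OF tl0[OF xb(1)]] eps by (intro order_tendstoD) auto
        then obtain N where "\<And>j. j \<ge> N \<Longrightarrow> \<bar>tl j x\<bar> < \<epsilon> / 2" by (auto simp: eventually_sequentially)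
        with xb(2)[of N] show "x \<in> {}" by force
      qed
      have Alim: "(\<lambda>k. prob (A k)) \<longlonglongrightarrow> 0"
        using finite_Lim_measure_decseq[of A] Asets Adec Aint by auto
      have Blim: "(\<lambda>k. prob (B k)) \<longlonglongrightarrow> 0"
        using finite_Lim_measure_decseq[of B] Bsets Bdec Bint by auto
      have "(\<lambda>k. prob (A k) + prob (B k)) \<longlonglongrightarrow> 0 + 0" by (intro tendsto_intros Alim Blim)
      then have "prob {x \<in> space M. x \<in> Sm \<and> \<epsilon> \<le> \<bar>D x\<bar>} \<le> 0"
        using le by (intro LIMSEQ_le_const) auto
      then show ?thesis using measure_nonneg[of M] by (simp add: order_antisym)
    qed
    have hn: "AE x in M. x \<in> Sm \<longrightarrow> \<bar>D x\<bar> < 1 / Suc n" for n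
    proof -
      have "emeasure M {x \<in> space M. x \<in> Sm \<and> 1 / Suc n \<le> \<bar>D x\<bar>} = 0"
        using P0[of "1 / Suc n"] by (simp add: emeasure_eq_measure)
      moreover have "{x \<in> space M. x \<in> Sm \<and> 1 / Suc n \<le> \<bar>D x\<bar>} \<in> sets M" by measurable
      ultimately show ?thesis
        by (subst AE_iff_measurable[where N="{x \<in> space M. x \<in> Sm \<and> 1 / Suc n \<le> \<bar>D x\<bar>}"]) (auto simp: not_less)
    qed
    have "AE x in M. \<forall>n. x \<in> Sm \<longrightarrow> \<bar>D x\<bar> < 1 / Suc n"
      by (rule AE_all_countable[THEN iffD2]) (use hn in blast)
    then show ?thesis
    proof eventually_elim
      case (elim x)
      show ?case
      proof
        assume "x \<in> Sm"
        then have h: "\<bar>D x\<bar> < 1 / Suc n" for n using elim by blast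
        show "D x = 0"
        proof (rule ccontr)
          assume "D x \<noteq> 0"
          then obtain n where n: "0 < n" "inverse (real n) < \<bar>D x\<bar>"
            using ex_inverse_of_nat_less[of "\<bar>D x\<bar>"] by auto
          then obtain n' where "n = Suc n'" using gr0_implies_Suc by blast
          with n h[of n'] show False by (simp add: inverse_eq_divide)
        qed
      qed
    qed
  qed
  show ?thesis using main AE_Sm by eventually_elim (simp add: D_def)
qed

end

primrec Urec :: "real \<Rightarrow> (int \<Rightarrow> 'a \<Rightarrow> real) \<Rightarrow> ('a \<Rightarrow> real) \<Rightarrow> int \<Rightarrow> nat \<Rightarrow> 'a \<Rightarrow> real" where
  "Urec \<phi> \<eta> z s0 0 = z"
| "Urec \<phi> \<eta> z s0 (Suc k) = (\<lambda>x. \<phi> * Urec \<phi> \<eta> z s0 k x + \<eta> (s0 + int (Suc k)) x)"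

locale model = zmu +
  fixes \<epsilon> :: "int \<Rightarrow> 'a \<Rightarrow> real" and s\<epsilon> :: real and s0 :: int and n :: nat
  assumes indJ: "indep_vars (\<lambda>_. borel) (\<lambda>i. case i of Inl s \<Rightarrow> \<eta> s | Inr s \<Rightarrow> \<epsilon> s) UNIV"
    and eps_g: "\<And>s. gaussian_rv M (\<epsilon> s) 0 s\<epsilon>"
begin

definition "X i = (case i of Inl s \<Rightarrow> \<eta> s | Inr s \<Rightarrow> \<epsilon> s)"
definition "II = Inl ` {s0..s0 + int n} \<union> Inr ` {s0..s0 + int n}"
definition "\<xi> i x = (if i = Inl s0 then Zf s0 x else X i x)"
definition "\<sigma> = v / (1 - \<phi>^2)"

lemma finII: "finite II" unfolding II_def by simp

lemma eps_gl: "gl (\<epsilon> j)" "expectation (\<lambda>x. \<epsilon> j x ^ 2) = s\<epsilon>" "\<epsilon> j \<in> borel_measurable M"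
  using gauss_moments[OF eps_g[of j]] eps_g[of j] by (auto simp: gaussian_rv_def)

lemma eps_meas[measurable]: "\<epsilon> j \<in> borel_measurable M" by (rule eps_gl(3))

lemma xi_indep: "indep_vars (\<lambda>_. borel) \<xi> II"
proof -
  define K where "K i = (if i = Inl s0 then Inl ` {..s0} else {i})" for i :: "int + int"
  define G where "G g = (\<Sum>j. \<phi>^j * g (Inl (s0 - int j)))" for g :: "int + int \<Rightarrow> real"
  define Y where "Y i = (if i = Inl s0 then G else (\<lambda>g. g i))" for i
  have indX: "indep_vars (\<lambda>_. borel) X UNIV" using indJ by (simp add: X_def[abs_def])
  have r: "indep_vars (\<lambda>i. PiM (K i) (\<lambda>_. borel)) (\<lambda>i \<omega>. restrict (\<lambda>j. X j \<omega>) (K i)) II"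
    by (rule indep_vars_restrict[OF indX]) (auto simp: K_def disjoint_family_on_def II_def)
  have Ym: "Y i \<in> borel_measurable (PiM (K i) (\<lambda>_. borel))" for i
  proof (cases "i = Inl s0")
    case True
    then show ?thesis unfolding Y_def G_def K_def if_P[OF True]
      by (intro borel_measurable_suminf borel_measurable_times borel_measurable_const
          measurable_component_singleton[where M="\<lambda>_. borel", simplified]) auto
  next
    case False
    then show ?thesis unfolding Y_def K_def if_not_P[OF False]
      by (intro measurable_component_singleton[where M="\<lambda>_. borel", simplified]) auto
  qed
  have "indep_vars (\<lambda>_. borel) (\<lambda>i x. Y i (restrict (\<lambda>j. X j x) (K i))) II"
    by (rule indep_vars_compose2[OF r Ym])
  moreover have "(\<lambda>x. Y i (restrict (\<lambda>j. X j x) (K i))) = \<xi> i" for i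
    by (auto simp: fun_eq_iff Y_def K_def G_def \<xi>_def Zf_def X_def)
  ultimately show ?thesis by simp
qed

lemma xi_eq: "\<xi> i = (if i = Inl s0 then Zf s0 else X i)"
  by (auto simp: fun_eq_iff \<xi>_def)

lemma xi_gl: "gl (\<xi> i)"
proof (cases i)
  case (Inl a)
  then show ?thesis by (cases "a = s0") (auto simp: xi_eq X_def Zf_gl eta_gl)
next
  case (Inr b)
  then show ?thesis by (auto simp: xi_eq X_def eps_gl)
qed

lemma xi_meas[measurable]: "\<xi> i \<in> borel_measurable M"
  using xi_gl[of i] by (simp add: gl_def)

lemma xi_var: "expectation (\<lambda>x. \<xi> (Inl s0) x ^ 2) = \<sigma>"
  "j \<noteq> s0 \<Longrightarrow> expectation (\<lambda>x. \<xi> (Inl j) x ^ 2) = v"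
  "expectation (\<lambda>x. \<xi> (Inr j) x ^ 2) = s\<epsilon>"
  by (auto simp: \<xi>_def X_def Zf_gl eta_gl eps_gl \<sigma>_def)

definition "lin c x = (\<Sum>i\<in>II. c i * \<xi> i x)"
definition "inLinS S f \<longleftrightarrow> (\<exists>c. (\<forall>i. i \<notin> S \<longrightarrow> c i = 0) \<and> (\<forall>x. f x = lin c x))"

lemma sum_ind: "i \<in> II \<Longrightarrow> (\<Sum>j\<in>II. (if j = i then 1 else 0) * f j) = (f i :: real)"
proof -
  assume i: "i \<in> II"
  have "(\<Sum>j\<in>II. (if j = i then 1 else 0) * f j) = (\<Sum>j\<in>II. if i = j then f j else 0)"
    by (rule sum.cong) auto
  also have "\<dots> = f i" using i finII by (simp add: sum.delta)
  finally show ?thesis .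
qed

lemma lin_gl: "gl (lin c)"
  unfolding lin_def[abs_def] by (rule gl_lin[OF finII xi_indep xi_gl])

lemma lin_cov': "expectation (\<lambda>x. lin c x * lin d x) = (\<Sum>i\<in>II. c i * d i * expectation (\<lambda>x. \<xi> i x ^ 2))"
  unfolding lin_def by (rule lin_cov[OF finII xi_indep xi_gl])

lemma inLinS_gl: "inLinS S f \<Longrightarrow> gl f"
  unfolding inLinS_def using lin_gl by (metis ext)

lemma inLinS_add: "inLinS S f \<Longrightarrow> inLinS S' g \<Longrightarrow> inLinS (S \<union> S') (\<lambda>x. a * f x + b * g x)"
proof -
  assume "inLinS S f" "inLinS S' g"
  then obtain c d where c: "\<forall>i. i \<notin> S \<longrightarrow> c i = 0" "\<forall>x. f x = lin c x"
    and d: "\<forall>i. i \<notin> S' \<longrightarrow> d i = 0" "\<forall>x. g x = lin d x" unfolding inLinS_def by blast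
  show ?thesis unfolding inLinS_def
    by (rule exI[of _ "\<lambda>i. a * c i + b * d i"])
       (use c d in \<open>auto simp: lin_def sum.distrib sum_distrib_left algebra_simps\<close>)
qed

lemma inLinS_mono: "inLinS S f \<Longrightarrow> S \<subseteq> S' \<Longrightarrow> inLinS S' f"
  unfolding inLinS_def by blast

lemma inLinS_xi: "i \<in> II \<Longrightarrow> inLinS {i} (\<xi> i)"
  unfolding inLinS_def lin_def
  by (rule exI[of _ "\<lambda>j. if j = i then 1 else 0"]) (simp add: sum_ind)

lemma inLinS_zero: "inLinS {} (\<lambda>x. 0)"
  unfolding inLinS_def lin_def by (rule exI[of _ "\<lambda>_. 0"]) simp

lemma inLinS_sum: "finite F \<Longrightarrow> (\<And>k. k \<in> F \<Longrightarrow> inLinS S (f k)) \<Longrightarrow> inLinS S (\<lambda>x. \<Sum>k\<in>F. f k x)"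
proof (induction F rule: finite_induct)
  case empty then show ?case using inLinS_mono[OF inLinS_zero] by simp
next
  case (insert k F)
  have "inLinS (S \<union> S) (\<lambda>x. 1 * f k x + 1 * (\<Sum>k\<in>F. f k x))"
    by (rule inLinS_add) (use insert in auto)
  then show ?case using insert by simp
qed

lemma inLinS_orth:
  assumes "inLinS S f" "i \<in> II" "i \<notin> S"
  shows "expectation (\<lambda>x. f x * \<xi> i x) = 0"
proof -
  obtain c where c: "\<forall>j. j \<notin> S \<longrightarrow> c j = 0" "\<forall>x. f x = lin c x" using assms(1) unfolding inLinS_def by blast
  define d where "d j = (if j = i then 1 else 0::real)" for j
  have "\<xi> i x = lin d x" for x using assms(2) sum_ind[of i "\<lambda>j. \<xi> j x"] by (simp add: lin_def d_def)
  then have "expectation (\<lambda>x. f x * \<xi> i x) = expectation (\<lambda>x. lin c x * lin d x)" using c by simp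
  also have "\<dots> = (\<Sum>j\<in>II. c j * d j * expectation (\<lambda>x. \<xi> j x ^ 2))" by (rule lin_cov')
  also have "\<dots> = 0" using c assms(3) by (intro sum.neutral) (auto simp: d_def)
  finally show ?thesis .
qed

lemma inLinS_prod_int: "inLinS S f \<Longrightarrow> inLinS S' g \<Longrightarrow> integrable M (\<lambda>x. f x * g x)"
  using mono_int[OF inLinS_gl inLinS_gl, of S f S' g 1 1] by simp

end

context model begin

definition "Ut k = Urec \<phi> \<eta> (Zf s0) s0 k"

lemma Ut_0: "Ut 0 = Zf s0" and Ut_Suc: "Ut (Suc k) x = \<phi> * Ut k x + \<eta> (s0 + int (Suc k)) x"
  by (simp_all add: Ut_def)

lemma U_Ut: "AE x in M. \<forall>k. U (s0 + int k) x = Ut k x"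
  using U_Z_AE[of s0] AE_space
proof eventually_elim
  case (elim x)
  show ?case
  proof
    fix k show "U (s0 + int k) x = Ut k x"
    proof (induction k)
      case 0 then show ?case using elim by (simp add: Ut_0)
    next
      case (Suc k)
      have "U (s0 + int (Suc k)) x = \<phi> * U (s0 + int (Suc k) - 1) x + \<eta> (s0 + int (Suc k)) x"
        by (rule U_rec) (use elim in simp)
      then show ?case using Suc by (simp add: Ut_Suc)
    qed
  qed
qed

lemma eta_xi: "j \<noteq> s0 \<Longrightarrow> \<eta> j = \<xi> (Inl j)" by (simp add: xi_eq X_def)
lemma eps_xi: "\<epsilon> j = \<xi> (Inr j)" by (simp add: xi_eq X_def)
lemma Zf_xi: "Zf s0 = \<xi> (Inl s0)" by (simp add: xi_eq)

lemma Ut_lin: "k \<le> n \<Longrightarrow> inLinS (Inl ` {s0..s0 + int k}) (Ut k)"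
proof (induction k)
  case 0
  have "inLinS {Inl s0} (\<xi> (Inl s0))" by (rule inLinS_xi) (simp add: II_def)
  then show ?case by (simp add: Ut_0 Zf_xi)
next
  case (Suc k)
  have a: "inLinS (Inl ` {s0..s0 + int k}) (Ut k)" using Suc by simp
  have b: "inLinS {Inl (s0 + int (Suc k))} (\<eta> (s0 + int (Suc k)))"
  proof -
    have "inLinS {Inl (s0 + int (Suc k))} (\<xi> (Inl (s0 + int (Suc k))))"
      by (rule inLinS_xi) (use Suc.prems in \<open>simp add: II_def\<close>)
    moreover have "\<eta> (s0 + int (Suc k)) = \<xi> (Inl (s0 + int (Suc k)))" by (rule eta_xi) simp
    ultimately show ?thesis by simp
  qed
  have "inLinS (Inl ` {s0..s0 + int k} \<union> {Inl (s0 + int (Suc k))}) (\<lambda>x. \<phi> * Ut k x + 1 * \<eta> (s0 + int (Suc k)) x)"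
    by (rule inLinS_add[OF a b])
  moreover have "(\<lambda>x. \<phi> * Ut k x + 1 * \<eta> (s0 + int (Suc k)) x) = Ut (Suc k)"
    by (simp add: fun_eq_iff Ut_Suc)
  ultimately have "inLinS (Inl ` {s0..s0 + int k} \<union> {Inl (s0 + int (Suc k))}) (Ut (Suc k))" by simp
  then show ?case by (rule inLinS_mono) auto
qed

lemma eps_lin: assumes "j \<in> {s0..s0 + int n}" shows "inLinS {Inr j} (\<epsilon> j)"
proof -
  have "inLinS {Inr j} (\<xi> (Inr j))" by (rule inLinS_xi) (use assms in \<open>simp add: II_def\<close>)
  then show ?thesis by (simp only: eps_xi)
qed

lemma eta_lin: assumes "j \<in> {s0<..s0 + int n}" shows "inLinS {Inl j} (\<eta> j)"
proof -
  have "inLinS {Inl j} (\<xi> (Inl j))" by (rule inLinS_xi) (use assms in \<open>auto simp add: II_def\<close>)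
  moreover have "\<eta> j = \<xi> (Inl j)" by (rule eta_xi) (use assms in simp)
  ultimately show ?thesis by simp
qed

lemma E_add2:
  fixes f g h :: "'a \<Rightarrow> real"
  assumes "integrable M (\<lambda>x. f x * g x)" "integrable M (\<lambda>x. f x * h x)"
  shows "expectation (\<lambda>x. f x * (a * g x + b * h x)) = a * expectation (\<lambda>x. f x * g x) + b * expectation (\<lambda>x. f x * h x)"
proof -
  have "(\<lambda>x. f x * (a * g x + b * h x)) = (\<lambda>x. a * (f x * g x) + b * (f x * h x))" by (simp add: fun_eq_iff algebra_simps)
  then show ?thesis using assms by simp
qed

lemma Ut_eta0: assumes "k \<le> l" "Suc l \<le> n" shows "expectation (\<lambda>x. Ut k x * \<eta> (s0 + int (Suc l)) x) = 0"
proof -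
  have "expectation (\<lambda>x. Ut k x * \<xi> (Inl (s0 + int (Suc l))) x) = 0"
    by (rule inLinS_orth[OF Ut_lin]) (use assms in \<open>auto simp: II_def\<close>)
  moreover have "\<eta> (s0 + int (Suc l)) = \<xi> (Inl (s0 + int (Suc l)))" by (rule eta_xi) simp
  ultimately show ?thesis by simp
qed

lemma Ut_eps0: assumes "k \<le> n" "j \<in> {s0..s0 + int n}" shows "expectation (\<lambda>x. Ut k x * \<epsilon> j x) = 0"
proof -
  have "expectation (\<lambda>x. Ut k x * \<xi> (Inr j) x) = 0"
    by (rule inLinS_orth[OF Ut_lin]) (use assms in \<open>auto simp: II_def\<close>)
  then show ?thesis by (simp only: eps_xi)
qed

lemma eps_eps: "i \<in> {s0..s0 + int n} \<Longrightarrow> j \<in> {s0..s0 + int n} \<Longrightarrow>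
   expectation (\<lambda>x. \<epsilon> i x * \<epsilon> j x) = (if i = j then s\<epsilon> else 0)"
proof (cases "i = j")
  case True then show ?thesis using eps_gl(2)[of j] by (simp add: power2_eq_square)
next
  case False
  assume ij: "i \<in> {s0..s0 + int n}" "j \<in> {s0..s0 + int n}"
  have "expectation (\<lambda>x. \<epsilon> i x * \<xi> (Inr j) x) = 0"
    by (rule inLinS_orth[OF eps_lin]) (use ij False in \<open>auto simp: II_def\<close>)
  then show ?thesis using False by (simp only: eps_xi) simp
qed

lemma Ut_sq: "k \<le> n \<Longrightarrow> expectation (\<lambda>x. Ut k x * Ut k x) = \<sigma>"
proof (induction k)
  case 0 then show ?case using Zf_gl(2)[of s0] by (simp add: Ut_0 \<sigma>_def power2_eq_square)
next
  case (Suc k)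
  have kn: "k \<le> n" using Suc by simp
  note U = Ut_lin[OF kn]
  note E = eta_lin[of "s0 + int (Suc k)"]
  have E': "inLinS {Inl (s0 + int (Suc k))} (\<eta> (s0 + int (Suc k)))" using E Suc.prems by auto
  have e: "(\<lambda>x. Ut (Suc k) x * Ut (Suc k) x) = (\<lambda>x. \<phi>^2 * (Ut k x * Ut k x) + (2 * \<phi>) * (Ut k x * \<eta> (s0 + int (Suc k)) x) + 1 * (\<eta> (s0 + int (Suc k)) x * \<eta> (s0 + int (Suc k)) x))"
    by (simp add: fun_eq_iff Ut_Suc power2_eq_square algebra_simps)
  have i1: "integrable M (\<lambda>x. Ut k x * Ut k x)" by (rule inLinS_prod_int[OF U U])
  have i2: "integrable M (\<lambda>x. Ut k x * \<eta> (s0 + int (Suc k)) x)" by (rule inLinS_prod_int[OF U E'])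
  have i3: "integrable M (\<lambda>x. \<eta> (s0 + int (Suc k)) x * \<eta> (s0 + int (Suc k)) x)" by (rule inLinS_prod_int[OF E' E'])
  have "expectation (\<lambda>x. Ut (Suc k) x * Ut (Suc k) x) = \<phi>^2 * \<sigma> + 2 * \<phi> * 0 + v"
    unfolding e using i1 i2 i3 Suc.IH[OF kn] Ut_eta0[of k k] Suc.prems eta_gl(2)[of "s0 + int (Suc k)"]
    by (simp add: power2_eq_square)
  also have "\<dots> = \<sigma>"
  proof -
    have "\<phi>^2 < 1" using ph0 ph1 by (simp add: abs_square_less_1)
    then show ?thesis by (simp add: \<sigma>_def field_simps)
  qed
  finally show ?case .
qed

lemma Ut_cov: "k + d \<le> n \<Longrightarrow> expectation (\<lambda>x. Ut k x * Ut (k + d) x) = \<phi>^d * \<sigma>"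
proof (induction d)
  case 0 then show ?case using Ut_sq[of k] by simp
next
  case (Suc d)
  have kd: "k + d \<le> n" using Suc by simp
  have U: "inLinS (Inl ` {s0..s0 + int k}) (Ut k)" using Ut_lin[of k] Suc.prems by simp
  have U2: "inLinS (Inl ` {s0..s0 + int (k + d)}) (Ut (k + d))" using Ut_lin[OF kd] .
  have E': "inLinS {Inl (s0 + int (Suc (k + d)))} (\<eta> (s0 + int (Suc (k + d))))" using eta_lin Suc.prems by auto
  have "expectation (\<lambda>x. Ut k x * Ut (k + Suc d) x) = expectation (\<lambda>x. Ut k x * (\<phi> * Ut (k + d) x + 1 * \<eta> (s0 + int (Suc (k + d))) x))"
    by (simp add: Ut_Suc)
  also have "\<dots> = \<phi> * expectation (\<lambda>x. Ut k x * Ut (k + d) x) + 1 * expectation (\<lambda>x. Ut k x * \<eta> (s0 + int (Suc (k + d))) x)"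
    by (rule E_add2[OF inLinS_prod_int[OF U U2] inLinS_prod_int[OF U E']])
  also have "\<dots> = \<phi>^(Suc d) * \<sigma>" using Suc.IH[OF kd] Ut_eta0[of k "k + d"] Suc.prems by simp
  finally show ?case .
qed

end

context model begin

definition "Yv k x = Ut k x + \<epsilon> (s0 + int k) x"

lemma Yv_lin: "k \<le> n \<Longrightarrow> inLinS UNIV (Yv k)"
proof -
  assume k: "k \<le> n"
  have "inLinS (Inl ` {s0..s0 + int k} \<union> {Inr (s0 + int k)}) (\<lambda>x. 1 * Ut k x + 1 * \<epsilon> (s0 + int k) x)"
    by (rule inLinS_add[OF Ut_lin[OF k] eps_lin]) (use k in auto)
  moreover have "(\<lambda>x. 1 * Ut k x + 1 * \<epsilon> (s0 + int k) x) = Yv k" by (simp add: fun_eq_iff Yv_def)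
  ultimately have "inLinS (Inl ` {s0..s0 + int k} \<union> {Inr (s0 + int k)}) (Yv k)" by simp
  then show ?thesis by (rule inLinS_mono) simp
qed

lemma prod_comm_E: "expectation (\<lambda>x. f x * g x) = expectation (\<lambda>x. g x * (f x :: real))"
  by (simp add: mult.commute)

lemma Ut_cov_gen: "k \<le> n \<Longrightarrow> l \<le> n \<Longrightarrow> expectation (\<lambda>x. Ut k x * Ut l x) = \<sigma> * \<phi>^(nat \<bar>int k - int l\<bar>)"
proof (cases "k \<le> l")
  case True
  assume "l \<le> n"
  then have "expectation (\<lambda>x. Ut k x * Ut (k + (l - k)) x) = \<phi>^(l - k) * \<sigma>" using True by (intro Ut_cov) auto
  moreover have "nat \<bar>int k - int l\<bar> = l - k" using True by simp
  ultimately show ?thesis using True by simp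
next
  case False
  assume "k \<le> n"
  then have "expectation (\<lambda>x. Ut l x * Ut (l + (k - l)) x) = \<phi>^(k - l) * \<sigma>" using False by (intro Ut_cov) auto
  moreover have "nat \<bar>int k - int l\<bar> = k - l" using False by simp
  ultimately show ?thesis using False by (subst prod_comm_E) simp
qed

lemma cov_Y: assumes "k \<le> n" "l \<le> n"
  shows "expectation (\<lambda>x. Yv k x * Yv l x) = \<sigma> * \<phi>^(nat \<bar>int k - int l\<bar>) + (if k = l then s\<epsilon> else 0)"
proof -
  have Uk: "inLinS (Inl ` {s0..s0 + int k}) (Ut k)" and Ul: "inLinS (Inl ` {s0..s0 + int l}) (Ut l)"
    using Ut_lin assms by auto
  have ek: "inLinS {Inr (s0 + int k)} (\<epsilon> (s0 + int k))" and el: "inLinS {Inr (s0 + int l)} (\<epsilon> (s0 + int l))"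
    using eps_lin assms by auto
  have e: "(\<lambda>x. Yv k x * Yv l x) = (\<lambda>x. Ut k x * Ut l x + Ut k x * \<epsilon> (s0 + int l) x + \<epsilon> (s0 + int k) x * Ut l x + \<epsilon> (s0 + int k) x * \<epsilon> (s0 + int l) x)"
    by (simp add: fun_eq_iff Yv_def algebra_simps)
  have "expectation (\<lambda>x. Yv k x * Yv l x) = expectation (\<lambda>x. Ut k x * Ut l x) + expectation (\<lambda>x. Ut k x * \<epsilon> (s0 + int l) x)
     + expectation (\<lambda>x. \<epsilon> (s0 + int k) x * Ut l x) + expectation (\<lambda>x. \<epsilon> (s0 + int k) x * \<epsilon> (s0 + int l) x)"
    unfolding e using inLinS_prod_int[OF Uk Ul] inLinS_prod_int[OF Uk el] inLinS_prod_int[OF ek Ul] inLinS_prod_int[OF ek el]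
    by simp
  also have "expectation (\<lambda>x. Ut k x * \<epsilon> (s0 + int l) x) = 0" using assms by (intro Ut_eps0) auto
  also have "expectation (\<lambda>x. \<epsilon> (s0 + int k) x * Ut l x) = 0" using assms by (subst prod_comm_E, intro Ut_eps0) auto
  also have "expectation (\<lambda>x. \<epsilon> (s0 + int k) x * \<epsilon> (s0 + int l) x) = (if k = l then s\<epsilon> else 0)"
    using assms by (subst eps_eps) auto
  finally show ?thesis using Ut_cov_gen assms by simp
qed

definition "AA x = (\<Sum>k<n. Yv k x)"
definition "BB x = Yv n x"

lemma AB_gl: "gl (\<lambda>x. \<alpha> * AA x + \<beta> * BB x)"
proof -
  have a: "inLinS UNIV AA" unfolding AA_def[abs_def] by (rule inLinS_sum) (auto intro: Yv_lin)
  have b: "inLinS UNIV BB" unfolding BB_def[abs_def] by (rule Yv_lin) simp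
  show ?thesis using inLinS_gl[OF inLinS_add[OF a b]] .
qed

lemma Y_int: "k \<le> n \<Longrightarrow> l \<le> n \<Longrightarrow> integrable M (\<lambda>x. Yv k x * Yv l x)"
  by (rule inLinS_prod_int[OF Yv_lin Yv_lin])

lemma EAA: "expectation (\<lambda>x. AA x ^ 2) = real n * (\<sigma> + s\<epsilon>) + \<sigma> * (\<Sum>k<n. \<Sum>l\<in>{..<n} - {k}. \<phi>^(nat \<bar>int k - int l\<bar>))"
proof -
  have "(\<lambda>x. AA x ^ 2) = (\<lambda>x. \<Sum>k<n. \<Sum>l<n. Yv k x * Yv l x)"
    by (simp add: fun_eq_iff AA_def power2_eq_square sum_product)
  then have "expectation (\<lambda>x. AA x ^ 2) = (\<Sum>k<n. expectation (\<lambda>x. \<Sum>l<n. Yv k x * Yv l x))"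
    by (simp only:) (rule Bochner_Integration.integral_sum, intro Bochner_Integration.integrable_sum Y_int, auto)
  also have "\<dots> = (\<Sum>k<n. \<Sum>l<n. expectation (\<lambda>x. Yv k x * Yv l x))"
    by (intro sum.cong refl Bochner_Integration.integral_sum Y_int) auto
  also have "\<dots> = (\<Sum>k<n. \<Sum>l<n. \<sigma> * \<phi>^(nat \<bar>int k - int l\<bar>) + (if k = l then s\<epsilon> else 0))"
    by (intro sum.cong refl) (simp add: cov_Y)
  also have "\<dots> = (\<Sum>k<n. (\<sigma> + s\<epsilon>) + \<sigma> * (\<Sum>l\<in>{..<n} - {k}. \<phi>^(nat \<bar>int k - int l\<bar>)))"
  proof (intro sum.cong refl)
    fix k assume k: "k \<in> {..<n}"
    have "(\<Sum>l<n. \<sigma> * \<phi>^(nat \<bar>int k - int l\<bar>) + (if k = l then s\<epsilon> else 0))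
      = (\<sigma> * \<phi>^(nat \<bar>int k - int k\<bar>) + (if k = k then s\<epsilon> else 0)) + (\<Sum>l\<in>{..<n} - {k}. \<sigma> * \<phi>^(nat \<bar>int k - int l\<bar>) + (if k = l then s\<epsilon> else 0))"
      using k by (subst sum.remove) auto
    also have "(\<Sum>l\<in>{..<n} - {k}. \<sigma> * \<phi>^(nat \<bar>int k - int l\<bar>) + (if k = l then s\<epsilon> else 0)) = (\<Sum>l\<in>{..<n} - {k}. \<sigma> * \<phi>^(nat \<bar>int k - int l\<bar>))"
      by (intro sum.cong refl) auto
    finally show "(\<Sum>l<n. \<sigma> * \<phi>^(nat \<bar>int k - int l\<bar>) + (if k = l then s\<epsilon> else 0)) = (\<sigma> + s\<epsilon>) + \<sigma> * (\<Sum>l\<in>{..<n} - {k}. \<phi>^(nat \<bar>int k - int l\<bar>))"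
      by (simp add: sum_distrib_left)
  qed
  also have "\<dots> = real n * (\<sigma> + s\<epsilon>) + \<sigma> * (\<Sum>k<n. \<Sum>l\<in>{..<n} - {k}. \<phi>^(nat \<bar>int k - int l\<bar>))"
    by (simp add: sum.distrib sum_distrib_left)
  finally show ?thesis .
qed

lemma EAB: "expectation (\<lambda>x. AA x * BB x) = \<sigma> * (\<Sum>k<n. \<phi>^(n - k))"
proof -
  have "(\<lambda>x. AA x * BB x) = (\<lambda>x. \<Sum>k<n. Yv k x * Yv n x)"
    by (simp add: fun_eq_iff AA_def BB_def sum_distrib_right)
  then have "expectation (\<lambda>x. AA x * BB x) = (\<Sum>k<n. expectation (\<lambda>x. Yv k x * Yv n x))"
    by (simp only:) (rule Bochner_Integration.integral_sum, rule Y_int, auto)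
  also have "\<dots> = (\<Sum>k<n. \<sigma> * \<phi>^(n - k))"
    by (intro sum.cong refl) (simp add: cov_Y nat_diff_distrib)
  finally show ?thesis by (simp add: sum_distrib_left)
qed

lemma EBB: "expectation (\<lambda>x. BB x ^ 2) = \<sigma> + s\<epsilon>"
  using cov_Y[of n n] by (simp add: BB_def power2_eq_square)

lemma var_AB: "variance (\<lambda>x. (a + AA x) * (b + BB x)) = a^2 * (\<sigma> + s\<epsilon>) + b^2 * expectation (\<lambda>x. AA x ^ 2)
      + 2 * a * b * expectation (\<lambda>x. AA x * BB x) + expectation (\<lambda>x. AA x ^ 2) * (\<sigma> + s\<epsilon>)
      + (expectation (\<lambda>x. AA x * BB x))^2"
  using gp_var[OF AB_gl, of a b] EBB by simp

end

context prob_space begin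

lemma var_cong_AE:
  fixes f g :: "'a \<Rightarrow> real"
  assumes "f \<in> borel_measurable M" "g \<in> borel_measurable M" "AE x in M. f x = g x"
  shows "variance f = variance g"
proof -
  have e: "expectation f = expectation g" by (rule integral_cong_AE) (use assms in auto)
  show ?thesis unfolding e by (rule integral_cong_AE) (use assms in \<open>auto elim: eventually_mono\<close>)
qed

lemma var_scale:
  fixes f :: "'a \<Rightarrow> real"
  shows "variance (\<lambda>x. c * f x) = c^2 * variance f"
proof -
  have "(\<lambda>x. (c * f x - expectation (\<lambda>x. c * f x))^2) = (\<lambda>x. c^2 * (f x - expectation f)^2)"
    by (simp add: fun_eq_iff power2_eq_square algebra_simps)
  then show ?thesis by simp
qed

lemma iid_var:
  fixes Rs :: "int \<Rightarrow> 'a \<Rightarrow> real"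
  assumes ind: "indep_vars (\<lambda>_. borel) Rs UNIV" and g: "\<And>s. gaussian_rv M (Rs s) mm w"
  shows "variance (\<lambda>x. (real n * mm + (\<Sum>k<n. Rs (s0 + int k) x - mm)) * (mm + (Rs (s0 + int n) x - mm)))
       = (real n * mm)^2 * w + mm^2 * (real n * w) + real n * w * w"
proof -
  define \<xi> where "\<xi> k x = Rs (s0 + int k) x - mm" for k x
  have ind1: "indep_vars (\<lambda>_. borel) (\<lambda>k. Rs (s0 + int k)) (UNIV :: nat set)"
    by (rule indep_vars_reindex_inj[OF ind]) (auto simp: inj_on_def)
  have indx: "indep_vars (\<lambda>_. borel) \<xi> {..n}"
    using indep_vars_subset[OF indep_vars_compose2[OF ind1, of "\<lambda>_ y. y - mm" "\<lambda>_. borel"]]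
    by (auto simp: \<xi>_def[abs_def])
  have gx: "gl (\<xi> k)" for k using gauss_moments(1)[OF g] by (simp add: \<xi>_def[abs_def])
  have vx: "expectation (\<lambda>x. \<xi> k x ^ 2) = w" for k using gauss_moments(2)[OF g] by (simp add: \<xi>_def)
  define c where "c k = (if k < n then 1 else 0::real)" for k
  define d where "d k = (if k = n then 1 else 0::real)" for k
  define A where "A x = (\<Sum>k\<in>{..n}. c k * \<xi> k x)" for x
  define B where "B x = (\<Sum>k\<in>{..n}. d k * \<xi> k x)" for x
  have sAt: "(\<Sum>k\<in>{..n}. f k) = (\<Sum>k<n. f k) + f n" for f :: "nat \<Rightarrow> real"
    by (simp add: lessThan_Suc_atMost[symmetric])
  have Ae: "A x = (\<Sum>k<n. Rs (s0 + int k) x - mm)" for x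
    unfolding A_def sAt by (simp add: c_def \<xi>_def)
  have Be: "B x = Rs (s0 + int n) x - mm" for x
    unfolding B_def sAt by (simp add: d_def \<xi>_def)
  have G: "gl (\<lambda>x. \<alpha> * A x + \<beta> * B x)" for \<alpha> \<beta>
  proof -
    have "gl (\<lambda>x. \<Sum>k\<in>{..n}. (\<alpha> * c k + \<beta> * d k) * \<xi> k x)" by (rule gl_lin[OF _ indx gx]) simp
    moreover have "(\<lambda>x. \<Sum>k\<in>{..n}. (\<alpha> * c k + \<beta> * d k) * \<xi> k x) = (\<lambda>x. \<alpha> * A x + \<beta> * B x)"
      by (simp add: fun_eq_iff A_def B_def sum_distrib_left sum.distrib algebra_simps)
    ultimately show ?thesis by simp
  qed
  have EAA: "expectation (\<lambda>x. A x ^ 2) = real n * w"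
  proof -
    have "expectation (\<lambda>x. A x * A x) = (\<Sum>k\<in>{..n}. c k * c k * expectation (\<lambda>x. \<xi> k x ^ 2))"
      unfolding A_def by (rule lin_cov[OF _ indx gx]) simp
    also have "\<dots> = real n * w" unfolding sAt by (simp add: c_def vx)
    finally show ?thesis by (simp add: power2_eq_square)
  qed
  have EBB: "expectation (\<lambda>x. B x ^ 2) = w"
  proof -
    have "expectation (\<lambda>x. B x * B x) = (\<Sum>k\<in>{..n}. d k * d k * expectation (\<lambda>x. \<xi> k x ^ 2))"
      unfolding B_def by (rule lin_cov[OF _ indx gx]) simp
    also have "\<dots> = w" unfolding sAt by (simp add: d_def vx)
    finally show ?thesis by (simp add: power2_eq_square)
  qed
  have EAB: "expectation (\<lambda>x. A x * B x) = 0"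
  proof -
    have "expectation (\<lambda>x. A x * B x) = (\<Sum>k\<in>{..n}. c k * d k * expectation (\<lambda>x. \<xi> k x ^ 2))"
      unfolding A_def B_def by (rule lin_cov[OF _ indx gx]) simp
    also have "\<dots> = 0" unfolding sAt by (simp add: c_def d_def)
    finally show ?thesis .
  qed
  have "variance (\<lambda>x. (real n * mm + A x) * (mm + B x)) = (real n * mm)^2 * w + mm^2 * (real n * w) + real n * w * w"
    using gp_var[OF G, of "real n * mm" mm] EAA EBB EAB by (simp add: power2_eq_square)
  then show ?thesis by (simp add: Ae Be)
qed

end

lemma A_coef_eq: "real n * A_coef n \<phi> = (\<Sum>k<n. \<phi>^(n - k))" if "n \<ge> 1"
proof -
  have "(\<Sum>k<n. \<phi>^(n - k)) = (\<Sum>k<n. (\<lambda>i. \<phi>^(Suc i)) (n - Suc k))"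
    by (intro sum.cong refl) (simp add: Suc_diff_Suc)
  also have "\<dots> = (\<Sum>i<n. \<phi>^(Suc i))" by (rule sum.nat_diff_reindex)
  also have "\<dots> = (\<Sum>k=1..n. \<phi>^k)"
    by (induction n) auto
  finally show ?thesis using that by (simp add: A_coef_def)
qed

lemma B_coef_eq: "(real n)^2 * B_coef n \<phi> = (\<Sum>k<n. \<Sum>l\<in>{..<n} - {k}. \<phi>^(nat \<bar>int k - int l\<bar>))" if "n \<ge> 1"
proof -
  have e: "{1..n} = Suc ` {..<n}" by (simp add: image_Suc_lessThan)
  have "(\<Sum>i=1..n. \<Sum>j\<in>{1..n} - {i}. \<phi> ^ (nat \<bar>int i - int j\<bar>))
     = (\<Sum>k<n. \<Sum>j\<in>{1..n} - {Suc k}. \<phi> ^ (nat \<bar>int (Suc k) - int j\<bar>))"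
    unfolding e by (subst sum.reindex) auto
  also have "\<dots> = (\<Sum>k<n. \<Sum>l\<in>{..<n} - {k}. \<phi>^(nat \<bar>int k - int l\<bar>))"
  proof (rule sum.cong[OF refl])
    fix k assume "k \<in> {..<n}"
    have "{1..n} - {Suc k} = Suc ` ({..<n} - {k})" unfolding e by (simp add: image_set_diff)
    then show "(\<Sum>j\<in>{1..n} - {Suc k}. \<phi> ^ (nat \<bar>int (Suc k) - int j\<bar>)) = (\<Sum>l\<in>{..<n} - {k}. \<phi>^(nat \<bar>int k - int l\<bar>))"
      by (simp add: sum.reindex)
  qed
  finally show ?thesis using that by (simp add: B_coef_def)
qed

lemma A_coef_bounds: assumes "0 \<le> \<phi>" "\<phi> < 1" "n \<ge> 1" shows "0 \<le> A_coef n \<phi>" "A_coef n \<phi> \<le> \<phi>"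
proof -
  show "0 \<le> A_coef n \<phi>" using assms by (simp add: A_coef_def sum_nonneg)
  have "(\<Sum>k=1..n. \<phi>^k) \<le> (\<Sum>k=1..n. \<phi>)"
    by (intro sum_mono) (use assms in \<open>auto intro: power_le_one power_decreasing[of 1, simplified]\<close>)
  then show "A_coef n \<phi> \<le> \<phi>" using assms by (simp add: A_coef_def field_simps)
qed

lemma B_coef_bounds: assumes "0 \<le> \<phi>" "\<phi> < 1" "n \<ge> 1" shows "0 \<le> B_coef n \<phi>" "B_coef n \<phi> \<le> \<phi>"
proof -
  show "0 \<le> B_coef n \<phi>" using assms by (simp add: B_coef_def sum_nonneg)
  have "(\<Sum>i=1..n. \<Sum>j\<in>{1..n} - {i}. \<phi> ^ (nat \<bar>int i - int j\<bar>)) \<le> (\<Sum>i=1..n. \<Sum>j\<in>{1..n} - {i}. \<phi>)"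
  proof (intro sum_mono)
    fix i j assume "j \<in> {1..n} - {i}"
    then have "nat \<bar>int i - int j\<bar> \<ge> 1" by auto
    then show "\<phi> ^ (nat \<bar>int i - int j\<bar>) \<le> \<phi>" using assms power_decreasing[of 1 "nat \<bar>int i - int j\<bar>" \<phi>] by simp
  qed
  also have "\<dots> \<le> (\<Sum>i=1..n. real n * \<phi>)"
  proof (intro sum_mono)
    fix i
    have "card ({1..n} - {i}) \<le> card {1..n}" by (rule card_mono) auto
    then have "real (card ({1..n} - {i})) \<le> real n" by simp
    then show "(\<Sum>j\<in>{1..n} - {i}. \<phi>) \<le> real n * \<phi>" using assms by (simp add: mult_right_mono)
  qed
  also have "\<dots> = (real n)^2 * \<phi>" by (simp add: power2_eq_square)
  finally show "B_coef n \<phi> \<le> \<phi>" using assms by (simp add: B_coef_def field_simps)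
qed

context model begin

lemma R_AE: "AE x in M. \<forall>k. \<mu>t (s0 + int k) x + \<epsilon> (s0 + int k) x = mm + Yv k x"
  using U_Ut
proof eventually_elim
  case (elim x)
  show ?case
  proof
    fix k
    have "\<mu>t (s0 + int k) x - mm = Ut k x" using elim by (simp add: U_def)
    then show "\<mu>t (s0 + int k) x + \<epsilon> (s0 + int k) x = mm + Yv k x" by (simp add: Yv_def)
  qed
qed

lemma Ut_meas[measurable]: "Ut k \<in> borel_measurable M"
proof (induction k)
  case 0 then show ?case by (simp add: Ut_0)
next
  case (Suc k)
  have "Ut (Suc k) = (\<lambda>x. \<phi> * Ut k x + \<eta> (s0 + int (Suc k)) x)" by (simp add: fun_eq_iff Ut_Suc)
  then show ?case using Suc by simp
qed

lemma Yv_meas[measurable]: "Yv k \<in> borel_measurable M"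
  unfolding Yv_def[abs_def] by measurable

lemma window_img: "{s0 + int n - 1 - int n + 1..s0 + int n - 1} = (\<lambda>k. s0 + int k) ` {..<n}"
proof safe
  fix i assume i: "i \<in> {s0 + int n - 1 - int n + 1..s0 + int n - 1}"
  then have "i = s0 + int (nat (i - s0))" "nat (i - s0) < n" by auto
  then show "i \<in> (\<lambda>k. s0 + int k) ` {..<n}" by blast
qed auto

lemma port_AE:
  "AE x in M. port_ret n \<gamma> sR2 (\<lambda>s x. \<mu>t s x + \<epsilon> s x) (s0 + int n - 1) x
      = (1 / (real n * \<gamma> * sR2)) * ((real n * mm + AA x) * (mm + BB x))"
  using R_AE
proof eventually_elim
  case (elim x)
  have "(\<Sum>i\<in>{s0 + int n - 1 - int n + 1..s0 + int n - 1}. \<mu>t i x + \<epsilon> i x) = (\<Sum>k<n. \<mu>t (s0 + int k) x + \<epsilon> (s0 + int k) x)"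
    unfolding window_img by (subst sum.reindex) (auto simp: inj_on_def)
  also have "\<dots> = (\<Sum>k<n. mm + Yv k x)" using elim by simp
  also have "\<dots> = real n * mm + AA x" by (simp add: AA_def sum.distrib)
  finally have s: "(\<Sum>i\<in>{s0 + int n - 1 - int n + 1..s0 + int n - 1}. \<mu>t i x + \<epsilon> i x) = real n * mm + AA x" .
  have r: "\<mu>t (s0 + int n - 1 + 1) x + \<epsilon> (s0 + int n - 1 + 1) x = mm + BB x" using elim[rule_format, of n] by (simp add: BB_def)
  show ?case unfolding port_ret_def roll_mean_def s r by (simp add: field_simps)
qed

lemma var_port:
  "variance (port_ret n \<gamma> sR2 (\<lambda>s x. \<mu>t s x + \<epsilon> s x) (s0 + int n - 1))
    = (1 / (real n * \<gamma> * sR2))^2 * ((real n * mm)^2 * (\<sigma> + s\<epsilon>) + mm^2 * expectation (\<lambda>x. AA x ^ 2)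
      + 2 * (real n * mm) * mm * expectation (\<lambda>x. AA x * BB x) + expectation (\<lambda>x. AA x ^ 2) * (\<sigma> + s\<epsilon>)
      + (expectation (\<lambda>x. AA x * BB x))^2)"
proof -
  have m1: "port_ret n \<gamma> sR2 (\<lambda>s x. \<mu>t s x + \<epsilon> s x) (s0 + int n - 1) \<in> borel_measurable M"
    unfolding port_ret_def[abs_def] roll_mean_def by measurable
  have AAm[measurable]: "AA \<in> borel_measurable M" unfolding AA_def[abs_def] by measurable
  have BBm[measurable]: "BB \<in> borel_measurable M" unfolding BB_def[abs_def] by measurable
  have "variance (port_ret n \<gamma> sR2 (\<lambda>s x. \<mu>t s x + \<epsilon> s x) (s0 + int n - 1))
     = variance (\<lambda>x. (1 / (real n * \<gamma> * sR2)) * ((real n * mm + AA x) * (mm + BB x)))"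
    by (rule var_cong_AE[OF m1 _ port_AE]) measurable
  also have "\<dots> = (1 / (real n * \<gamma> * sR2))^2 * variance (\<lambda>x. (real n * mm + AA x) * (mm + BB x))"
    by (rule var_scale)
  finally show ?thesis by (simp add: var_AB)
qed

lemma corr_R:
  assumes n1: "n \<ge> 1" and pos: "\<sigma> + s\<epsilon> > 0"
  shows "corr M (\<lambda>x. \<mu>t (s0 + int n - 1) x + \<epsilon> (s0 + int n - 1) x)
                (\<lambda>x. \<mu>t (s0 + int n - 1 + 1) x + \<epsilon> (s0 + int n - 1 + 1) x) = \<sigma> * \<phi> / (\<sigma> + s\<epsilon>)"
proof -
  define k1 where "k1 = n - 1"
  have k1: "s0 + int n - 1 = s0 + int k1" "s0 + int n - 1 + 1 = s0 + int n" "k1 \<le> n" using n1 by (auto simp: k1_def)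
  let ?R1 = "\<lambda>x. \<mu>t (s0 + int k1) x + \<epsilon> (s0 + int k1) x"
  let ?R2 = "\<lambda>x. \<mu>t (s0 + int n) x + \<epsilon> (s0 + int n) x"
  have Y1: "inLinS UNIV (Yv k1)" and Y2: "inLinS UNIV (Yv n)" using Yv_lin k1 by auto
  have i1: "integrable M (Yv k1)" using gl_int[OF inLinS_gl[OF Y1], of 1] by simp
  have i2: "integrable M (Yv n)" using gl_int[OF inLinS_gl[OF Y2], of 1] by simp
  have e1: "expectation (Yv k1) = 0" using inLinS_gl[OF Y1] by (simp add: gl_def)
  have e2: "expectation (Yv n) = 0" using inLinS_gl[OF Y2] by (simp add: gl_def)
  have i12: "integrable M (\<lambda>x. Yv k1 x * Yv n x)" by (rule inLinS_prod_int[OF Y1 Y2])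
  have i11: "integrable M (\<lambda>x. Yv k1 x * Yv k1 x)" by (rule inLinS_prod_int[OF Y1 Y1])
  have i22: "integrable M (\<lambda>x. Yv n x * Yv n x)" by (rule inLinS_prod_int[OF Y2 Y2])
  have c12: "expectation (\<lambda>x. Yv k1 x * Yv n x) = \<sigma> * \<phi>"
    using cov_Y[of k1 n] k1 n1 by (simp add: k1_def)
  have c11: "expectation (\<lambda>x. Yv k1 x * Yv k1 x) = \<sigma> + s\<epsilon>" using cov_Y[of k1 k1] k1 by simp
  have c22: "expectation (\<lambda>x. Yv n x * Yv n x) = \<sigma> + s\<epsilon>" using cov_Y[of n n] by simp
  have ae1: "AE x in M. ?R1 x = mm + Yv k1 x" and ae2: "AE x in M. ?R2 x = mm + Yv n x"
    using R_AE by (auto elim: eventually_mono)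
  have ae12: "AE x in M. ?R1 x * ?R2 x = mm * mm + mm * Yv n x + mm * Yv k1 x + Yv k1 x * Yv n x"
    using ae1 ae2 by eventually_elim (simp add: algebra_simps)
  have E1: "expectation ?R1 = mm"
  proof -
    have "expectation ?R1 = expectation (\<lambda>x. mm + Yv k1 x)" by (rule integral_cong_AE) (use ae1 in auto)
    then show ?thesis using i1 e1 by (simp add: prob_space)
  qed
  have E2: "expectation ?R2 = mm"
  proof -
    have "expectation ?R2 = expectation (\<lambda>x. mm + Yv n x)" by (rule integral_cong_AE) (use ae2 in auto)
    then show ?thesis using i2 e2 by (simp add: prob_space)
  qed
  have E12: "expectation (\<lambda>x. ?R1 x * ?R2 x) = mm * mm + \<sigma> * \<phi>"
  proof -
    have "expectation (\<lambda>x. ?R1 x * ?R2 x) = expectation (\<lambda>x. mm * mm + mm * Yv n x + mm * Yv k1 x + Yv k1 x * Yv n x)"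
      by (rule integral_cong_AE) (use ae12 in auto)
    then show ?thesis using i1 i2 i12 e1 e2 c12 by (simp add: prob_space)
  qed
  have V1: "variance ?R1 = \<sigma> + s\<epsilon>"
  proof -
    have "variance ?R1 = expectation (\<lambda>x. (?R1 x - mm)^2)" by (simp add: E1)
    also have "\<dots> = expectation (\<lambda>x. Yv k1 x * Yv k1 x)"
      by (rule integral_cong_AE) (use ae1 in \<open>auto simp: power2_eq_square elim: eventually_mono\<close>)
    finally show ?thesis using c11 by simp
  qed
  have V2: "variance ?R2 = \<sigma> + s\<epsilon>"
  proof -
    have "variance ?R2 = expectation (\<lambda>x. (?R2 x - mm)^2)" by (simp add: E2)
    also have "\<dots> = expectation (\<lambda>x. Yv n x * Yv n x)"
      by (rule integral_cong_AE) (use ae2 in \<open>auto simp: power2_eq_square elim: eventually_mono\<close>)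
    finally show ?thesis using c22 by simp
  qed
  have "corr M ?R1 ?R2 = \<sigma> * \<phi> / (\<sigma> + s\<epsilon>)"
    using V1 V2 pos unfolding corr_def E1 E2 E12 by simp
  then show ?thesis unfolding k1(2) unfolding k1(1) .
qed

end

lemma final_alg:
  fixes N \<gamma> sR2 \<sigma> m Ac Bc \<phi> :: real
  assumes N: "N > 0" and g: "\<gamma> > 0" and sR: "sR2 > 0" and s0: "0 \<le> \<sigma>"
    and A0: "0 \<le> Ac" "Ac \<le> \<phi>" and B0: "0 \<le> Bc" "Bc \<le> \<phi>"
  defines "c \<equiv> 1 / (N * \<gamma> * sR2)"
  defines "EA2 \<equiv> N * sR2 + \<sigma> * (N^2 * Bc)"
  defines "EAB \<equiv> \<sigma> * (N * Ac)"
  defines "\<theta> \<equiv> m / sqrt sR2"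
  defines "\<psi> \<equiv> \<sigma> * \<phi> / sR2"
  defines "bias \<equiv> c^2 * ((N * m)^2 * sR2 + m^2 * (N * sR2) + N * sR2 * sR2)
      - c^2 * ((N * m)^2 * sR2 + m^2 * EA2 + 2 * (N * m) * m * EAB + EA2 * sR2 + EAB^2)"
  shows "bias = - (1 / \<gamma>\<^sup>2) * ((\<theta>\<^sup>2 + 1) * (\<sigma> / sR2) * Bc + (\<sigma> / sR2) * Ac * ((\<sigma> / sR2) * Ac + 2 * \<theta>\<^sup>2))
      \<and> - ((3 * \<theta>\<^sup>2 + \<psi> + 1) / \<gamma>\<^sup>2) * \<psi> \<le> bias \<and> bias \<le> 0"
proof -
  have th: "\<theta>^2 = m^2 / sR2" using sR by (simp add: \<theta>_def power_divide)
  define r where "r = \<sigma> / sR2"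
  have r0: "0 \<le> r" using s0 sR by (simp add: r_def)
  have eq: "bias = - (1 / \<gamma>\<^sup>2) * ((\<theta>\<^sup>2 + 1) * r * Bc + r * Ac * (r * Ac + 2 * \<theta>\<^sup>2))"
    unfolding bias_def c_def EA2_def EAB_def th r_def using N g sR
    by (simp add: field_simps power2_eq_square)
  define K where "K = (\<theta>\<^sup>2 + 1) * r * Bc + r * Ac * (r * Ac + 2 * \<theta>\<^sup>2)"
  have t0: "0 \<le> \<theta>^2" by simp
  have K0: "0 \<le> K" unfolding K_def using r0 A0 B0 t0 by (intro add_nonneg_nonneg mult_nonneg_nonneg) auto
  have KC: "K \<le> (3 * \<theta>\<^sup>2 + \<psi> + 1) * \<psi>"
  proof -
    have "(\<theta>\<^sup>2 + 1) * r * Bc \<le> (\<theta>\<^sup>2 + 1) * r * \<phi>" using r0 t0 B0 by (intro mult_left_mono) auto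
    moreover have "r * Ac * (r * Ac + 2 * \<theta>\<^sup>2) \<le> r * \<phi> * (r * \<phi> + 2 * \<theta>\<^sup>2)"
      using r0 t0 A0 by (intro mult_mono add_mono mult_left_mono) auto
    moreover have "\<psi> = r * \<phi>" by (simp add: \<psi>_def r_def)
    ultimately show ?thesis unfolding K_def by (simp add: algebra_simps power2_eq_square)
  qed
  have g2: "0 < 1 / \<gamma>\<^sup>2" using g by simp
  show ?thesis
  proof (intro conjI)
    show "bias = - (1 / \<gamma>\<^sup>2) * ((\<theta>\<^sup>2 + 1) * (\<sigma> / sR2) * Bc + (\<sigma> / sR2) * Ac * ((\<sigma> / sR2) * Ac + 2 * \<theta>\<^sup>2))"
      using eq by (simp add: r_def)
    show "- ((3 * \<theta>\<^sup>2 + \<psi> + 1) / \<gamma>\<^sup>2) * \<psi> \<le> bias"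
    proof -
      have "(1 / \<gamma>\<^sup>2) * K \<le> (1 / \<gamma>\<^sup>2) * ((3 * \<theta>\<^sup>2 + \<psi> + 1) * \<psi>)" using KC g2 by (intro mult_left_mono) auto
      moreover have bK: "bias = - ((1 / \<gamma>\<^sup>2) * K)" using eq unfolding K_def by simp
      moreover have "- ((3 * \<theta>\<^sup>2 + \<psi> + 1) / \<gamma>\<^sup>2) * \<psi> = - ((1 / \<gamma>\<^sup>2) * ((3 * \<theta>\<^sup>2 + \<psi> + 1) * \<psi>))"
        by (simp add: field_simps)
      ultimately show ?thesis by linarith
    qed
    have bK: "bias = - ((1 / \<gamma>\<^sup>2) * K)" using eq unfolding K_def by simp
    show "bias \<le> 0" unfolding bK using K0 g2 by simp
  qed
qed

theorem proposition2:
  fixes M :: "'a measure"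
    and \<eta> \<epsilon> \<mu>t Rs :: "int \<Rightarrow> 'a \<Rightarrow> real"
    and \<phi> \<mu>0 s\<eta>2 s\<epsilon>2 \<gamma> :: real
    and n :: nat and t :: int
  assumes P: "prob_space M"
    and phi: "0 \<le> \<phi>" "\<phi> < 1"
    and s_eta: "s\<eta>2 \<ge> 0" and s_eps: "s\<epsilon>2 > 0"
    and n: "n \<ge> 1" and gam: "\<gamma> > 0"
    \<comment> \<open>(eta_t) iid N(0, s_eta^2), (eps_t) iid N(0, s_eps^2), the two families mutually independent\<close>
    and indep: "prob_space.indep_vars M (\<lambda>_. borel)
                  (\<lambda>i. case i of Inl s \<Rightarrow> \<eta> s | Inr s \<Rightarrow> \<epsilon> s) UNIV"
    and eta_dist: "\<And>s. gaussian_rv M (\<eta> s) 0 s\<eta>2"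
    and eps_dist: "\<And>s. gaussian_rv M (\<epsilon> s) 0 s\<epsilon>2"
    \<comment> \<open>(mu_t) is a (strictly) stationary solution of mu_t = mu_0 + phi mu_{t-1} + eta_t\<close>
    and mu_rv: "\<And>s. \<mu>t s \<in> borel_measurable M"
    and mu_rec: "\<And>s x. x \<in> space M \<Longrightarrow> \<mu>t s x = \<mu>0 + \<phi> * \<mu>t (s - 1) x + \<eta> s x"
    and mu_stat: "\<And>h. distr M (PiM UNIV (\<lambda>_. borel)) (\<lambda>x s. \<mu>t (s + h) x)
                      = distr M (PiM UNIV (\<lambda>_. borel)) (\<lambda>x s. \<mu>t s x)"
    \<comment> \<open>IID-resampled returns with the marginal law N(mu, sigma_R^2) of R_t\<close>
    and Rs_indep: "prob_space.indep_vars M (\<lambda>_. borel) Rs UNIV"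
    and Rs_dist: "\<And>s. gaussian_rv M (Rs s) (\<mu>0 / (1 - \<phi>)) (s\<eta>2 / (1 - \<phi>\<^sup>2) + s\<epsilon>2)"
  shows
    "let R = (\<lambda>s x. \<mu>t s x + \<epsilon> s x);
         s\<mu>2 = s\<eta>2 / (1 - \<phi>\<^sup>2);
         sR2 = s\<mu>2 + s\<epsilon>2;
         m = \<mu>0 / (1 - \<phi>);
         \<theta> = m / sqrt sR2;
         \<psi> = corr M (R t) (R (t + 1));
         bias = prob_space.variance M (port_ret n \<gamma> sR2 Rs t)
                - prob_space.variance M (port_ret n \<gamma> sR2 R t);
         C = 3 * \<theta>\<^sup>2 + \<psi> + 1
     in bias = - (1 / \<gamma>\<^sup>2) * ((\<theta>\<^sup>2 + 1) * (s\<mu>2 / sR2) * B_coef n \<phi>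
                 + (s\<mu>2 / sR2) * A_coef n \<phi> * ((s\<mu>2 / sR2) * A_coef n \<phi> + 2 * \<theta>\<^sup>2))
      \<and> - (C / \<gamma>\<^sup>2) * \<psi> \<le> bias \<and> bias \<le> 0"
proof -
  interpret prob_space M by (rule P)
  have indeta: "indep_vars (\<lambda>_. borel) \<eta> UNIV"
  proof -
    have "indep_vars (\<lambda>_. borel) (\<lambda>j. (\<lambda>i. case i of Inl s \<Rightarrow> \<eta> s | Inr s \<Rightarrow> \<epsilon> s) (Inl j)) UNIV"
      by (rule indep_vars_reindex_inj[OF indep]) auto
    then show ?thesis by simp
  qed
  define s0 where "s0 = t - int n + 1"
  interpret model M \<eta> \<phi> s\<eta>2 \<mu>t \<mu>0 \<epsilon> s\<epsilon>2 s0 n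
    by unfold_locales (auto intro: indeta eta_dist mu_rv mu_rec mu_stat indep eps_dist simp: phi)
  have tt: "t = s0 + int n - 1" by (simp add: s0_def)
  have q1: "\<phi>^2 < 1" using phi by (simp add: abs_square_less_1)
  have \<sigma>0: "0 \<le> \<sigma>" unfolding \<sigma>_def using s_eta q1 by simp
  define sR2 where "sR2 = s\<eta>2 / (1 - \<phi>\<^sup>2) + s\<epsilon>2"
  have sR2e: "\<sigma> + s\<epsilon>2 = sR2" by (simp add: sR2_def \<sigma>_def)
  have sRpos: "sR2 > 0" using \<sigma>0 s_eps sR2e by linarith
  have Npos: "real n > 0" using n by simp
  define m where "m = \<mu>0 / (1 - \<phi>)"
  have mm_eq: "mm = m" by (simp add: mm_def m_def)
  have EA2: "expectation (\<lambda>x. AA x ^ 2) = real n * sR2 + \<sigma> * ((real n)^2 * B_coef n \<phi>)"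
    using EAA B_coef_eq[OF n, of \<phi>] sR2e by simp
  have EAB': "expectation (\<lambda>x. AA x * BB x) = \<sigma> * (real n * A_coef n \<phi>)"
    using EAB A_coef_eq[OF n, of \<phi>] by simp
  have VR: "variance (port_ret n \<gamma> sR2 (\<lambda>s x. \<mu>t s x + \<epsilon> s x) t)
    = (1 / (real n * \<gamma> * sR2))^2 * ((real n * m)^2 * sR2 + m^2 * (real n * sR2 + \<sigma> * ((real n)^2 * B_coef n \<phi>))
      + 2 * (real n * m) * m * (\<sigma> * (real n * A_coef n \<phi>)) + (real n * sR2 + \<sigma> * ((real n)^2 * B_coef n \<phi>)) * sR2
      + (\<sigma> * (real n * A_coef n \<phi>))^2)"
    unfolding tt var_port EA2 EAB' sR2e mm_eq ..
  have VS: "variance (port_ret n \<gamma> sR2 Rs t)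
    = (1 / (real n * \<gamma> * sR2))^2 * ((real n * m)^2 * sR2 + m^2 * (real n * sR2) + real n * sR2 * sR2)"
  proof -
    have "port_ret n \<gamma> sR2 Rs t = (\<lambda>x. (1 / (real n * \<gamma> * sR2)) * ((real n * m + (\<Sum>k<n. Rs (s0 + int k) x - m)) * (m + (Rs (s0 + int n) x - m))))"
    proof
      fix x
      have "(\<Sum>i\<in>{t - int n + 1..t}. Rs i x) = (\<Sum>k<n. Rs (s0 + int k) x)"
        unfolding tt window_img by (subst sum.reindex) (auto simp: inj_on_def)
      also have "\<dots> = real n * m + (\<Sum>k<n. Rs (s0 + int k) x - m)" by (simp add: sum_subtractf)
      finally have s: "(\<Sum>i\<in>{t - int n + 1..t}. Rs i x) = real n * m + (\<Sum>k<n. Rs (s0 + int k) x - m)" .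
      have r: "t + 1 = s0 + int n" by (simp add: tt)
      show "port_ret n \<gamma> sR2 Rs t x = (1 / (real n * \<gamma> * sR2)) * ((real n * m + (\<Sum>k<n. Rs (s0 + int k) x - m)) * (m + (Rs (s0 + int n) x - m)))"
        unfolding port_ret_def roll_mean_def s r by (simp add: field_simps)
    qed
    then have "variance (port_ret n \<gamma> sR2 Rs t) = (1 / (real n * \<gamma> * sR2))^2 *
        variance (\<lambda>x. (real n * m + (\<Sum>k<n. Rs (s0 + int k) x - m)) * (m + (Rs (s0 + int n) x - m)))"
      by (simp only:) (rule var_scale)
    also have "variance (\<lambda>x. (real n * m + (\<Sum>k<n. Rs (s0 + int k) x - m)) * (m + (Rs (s0 + int n) x - m)))
       = (real n * m)^2 * sR2 + m^2 * (real n * sR2) + real n * sR2 * sR2"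
      by (rule iid_var[OF Rs_indep]) (use Rs_dist in \<open>simp add: sR2_def m_def\<close>)
    finally show ?thesis .
  qed
  have psi: "corr M (\<lambda>x. \<mu>t t x + \<epsilon> t x) (\<lambda>x. \<mu>t (t + 1) x + \<epsilon> (t + 1) x) = \<sigma> * \<phi> / sR2"
    using corr_R[OF n] sR2e sRpos unfolding tt by simp
  have Ab: "0 \<le> A_coef n \<phi>" "A_coef n \<phi> \<le> \<phi>" using A_coef_bounds phi n by auto
  have Bb: "0 \<le> B_coef n \<phi>" "B_coef n \<phi> \<le> \<phi>" using B_coef_bounds phi n by auto
  note FA = final_alg[OF Npos gam sRpos \<sigma>0 Ab Bb, of m]
  have s\<mu>: "s\<eta>2 / (1 - \<phi>\<^sup>2) = \<sigma>" by (simp add: \<sigma>_def)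
  show ?thesis
    unfolding Let_def s\<mu> sR2e m_def[symmetric] psi VR VS
    using FA by simp
qed

end
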